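(* Let $\mathcal G$ be a Markov $\alpha$-potential game with $\alpha$-potential function $\Phi$, stage payoffs $u_i(s,a)\in[0,1]$, and initial distribution $\mu\in\Delta(S)$. Let $C_\Phi>0$ satisfy $|\Phi(\mu',\pi)-\Phi(\mu',\pi')|\le C_\Phi$ for all $\pi,\pi'\in\Pi$, $\mu'\in\Delta(S)$, and let $\tilde\kappa_\mu=\min_{\nu\in\Delta(S)}\max_{\pi\in\Pi}\|d_\mu^\pi/\nu\|_\infty<\infty$. Then the projected gradient-ascent algorithm run for $T$ steps with step size $$\eta=\frac{(1-\delta)^{2.5}\sqrt{C_\Phi+|I|^2\alpha T}}{2|I|\bar A\sqrt T}$$ satisfies $$\text{Nash-regret}(T)\le\mathcal O\Big(\frac{\sqrt{\tilde\kappa_\mu\bar A|I|}}{(1-\delta)^{9/4}}\Big(\frac{C_\Phi}{T}+|I|^2\alpha\Big)^{1/4}\Big).$$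
   Context: Markov game $\langle I,S,(A_i),(u_i),P,\delta\rangle$ with finite $I,S,A_i$, $\delta\in(0,1)$; $\bar A=\max_i|A_i|$. Stationary policies $\pi_i$ with $\pi_i(s)\in\Delta(A_i)$, sets $\Pi_i$, $\Pi$, $\Pi_{-i}$; $\pi_{-i}(s,a_{-i})=\prod_{j\ne i}\pi_j(s,a_j)$. $V_i(\mu,\pi)=\mathbb E[\sum_k\delta^k u_i(s^k,a^k)]$ with $s^0\sim\mu$, $a^k\sim\pi(s^k)$, $s^{k+1}\sim P(\cdot|s^k,a^k)$; $V_i(s,\pi)$ for initial state $s$. Markov $\alpha$-potential game: exists $\Phi:S\times\Pi\to\mathbb R$ with $|(\Phi(s,\pi_i',\pi_{-i})-\Phi(s,\pi_i,\pi_{-i}))-(V_i(s,\pi_i',\pi_{-i})-V_i(s,\pi_i,\pi_{-i}))|\le\alpha$ for all $s,i,\pi_i,\pi_i',\pi_{-i}$; $\Phi(\mu,\pi)=\sum_s\mu(s)\Phi(s,\pi)$. $d_\mu^\pi(s)=(1-\delta)\sum_{k\ge0}\delta^k\Pr(s^k=s\mid s^0\sim\mu)$. $Q_i(s,a_i;\pi)=\sum_{a_{-i}}\pi_{-i}(s,a_{-i})\big(u_i(s,a)+\delta\sum_{s'}P(s'|s,a)V_i(s',\pi)\big)$, $Q_i(s;\pi)$ the vector over $a_i$. Projected gradient-ascent algorithm: $\pi_i^{(0)}(s,a_i)=1/|A_i|$ and $\pi_i^{(t+1)}(s)=\mathcal P_{\Delta(A_i)}(\pi_i^{(t)}(s)+\eta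 Q_i(s;\pi^{(t)}))$ for all $i,s$ (Euclidean projection onto the simplex). Nash-regret: $\text{Nash-regret}(T)=\frac1T\sum_{t=1}^T\max_{i\in I}\big(\max_{\pi_i'\in\Pi_i}V_i(\mu,\pi_i',\pi_{-i}^{(t)})-V_i(\mu,\pi^{(t)})\big)$. *)

theory Defs
  imports Complex_Main "HOL-Library.Extended_Real" "HOL-Library.FuncSet"
begin

text \<open>
Players are I = {..<n}, states S = {..<m}, the actions of
player i are A_i = {..<k i}.  Stage payoff: u i s a.  Transition kernel: P s a s'.
A (joint) stationary policy is pol :: nat => nat => nat => real with pol i s a_i the
probability that player i plays a_i in state s; outside the relevant ranges it is 0
(canonical representation).
\<close>

definition joint_actions :: "nat \<Rightarrow> (nat \<Rightarrow> nat) \<Rightarrow> (nat \<Rightarrow> nat) set" where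
  "joint_actions n k = (\<Pi>\<^sub>E i\<in>{..<n}. {..<k i})"

definition simplex :: "nat \<Rightarrow> (nat \<Rightarrow> real) set" where
  "simplex K = {y. (\<forall>a<K. 0 \<le> y a) \<and> (\<Sum>a<K. y a) = 1 \<and> (\<forall>a\<ge>K. y a = 0)}"

definition state_dists :: "nat \<Rightarrow> (nat \<Rightarrow> real) set" where
  "state_dists m = {\<mu>. (\<forall>s<m. 0 \<le> \<mu> s) \<and> (\<Sum>s<m. \<mu> s) = 1}"

definition player_policies :: "nat \<Rightarrow> nat \<Rightarrow> (nat \<Rightarrow> nat \<Rightarrow> real) set" where
  "player_policies m K = {p. (\<forall>s<m. p s \<in> simplex K) \<and> (\<forall>s\<ge>m. \<forall>a. p s a = 0)}"

definition policies :: "nat \<Rightarrow> nat \<Rightarrow> (nat \<Rightarrow> nat) \<Rightarrow> (nat \<Rightarrow> nat \<Rightarrow> nat \<Rightarrow> real) set" where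
  "policies n m k = {pol. (\<forall>i<n. pol i \<in> player_policies m (k i)) \<and> (\<forall>i\<ge>n. pol i = (\<lambda>_ _. 0))}"

definition pjoint :: "nat \<Rightarrow> (nat \<Rightarrow> nat \<Rightarrow> nat \<Rightarrow> real) \<Rightarrow> nat \<Rightarrow> (nat \<Rightarrow> nat) \<Rightarrow> real" where
  "pjoint n pol s a = (\<Prod>i<n. pol i s (a i))"

definition trans_mat :: "nat \<Rightarrow> (nat \<Rightarrow> nat) \<Rightarrow> (nat \<Rightarrow> (nat \<Rightarrow> nat) \<Rightarrow> nat \<Rightarrow> real)
    \<Rightarrow> (nat \<Rightarrow> nat \<Rightarrow> nat \<Rightarrow> real) \<Rightarrow> nat \<Rightarrow> nat \<Rightarrow> real" where
  "trans_mat n k P pol s s' = (\<Sum>a\<in>joint_actions n k. pjoint n pol s a * P s a s')"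

fun stdist :: "nat \<Rightarrow> nat \<Rightarrow> (nat \<Rightarrow> nat) \<Rightarrow> (nat \<Rightarrow> (nat \<Rightarrow> nat) \<Rightarrow> nat \<Rightarrow> real)
    \<Rightarrow> (nat \<Rightarrow> nat \<Rightarrow> nat \<Rightarrow> real) \<Rightarrow> (nat \<Rightarrow> real) \<Rightarrow> nat \<Rightarrow> nat \<Rightarrow> real" where
  "stdist n m k P pol \<mu> 0 s = \<mu> s"
| "stdist n m k P pol \<mu> (Suc t) s' = (\<Sum>s<m. stdist n m k P pol \<mu> t s * trans_mat n k P pol s s')"

definition exp_reward :: "nat \<Rightarrow> (nat \<Rightarrow> nat) \<Rightarrow> (nat \<Rightarrow> nat \<Rightarrow> (nat \<Rightarrow> nat) \<Rightarrow> real)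
    \<Rightarrow> nat \<Rightarrow> (nat \<Rightarrow> nat \<Rightarrow> nat \<Rightarrow> real) \<Rightarrow> nat \<Rightarrow> real" where
  "exp_reward n k u i pol s = (\<Sum>a\<in>joint_actions n k. pjoint n pol s a * u i s a)"

definition value_fn :: "nat \<Rightarrow> nat \<Rightarrow> (nat \<Rightarrow> nat) \<Rightarrow> (nat \<Rightarrow> nat \<Rightarrow> (nat \<Rightarrow> nat) \<Rightarrow> real)
    \<Rightarrow> (nat \<Rightarrow> (nat \<Rightarrow> nat) \<Rightarrow> nat \<Rightarrow> real) \<Rightarrow> real \<Rightarrow> nat \<Rightarrow> (nat \<Rightarrow> real)
    \<Rightarrow> (nat \<Rightarrow> nat \<Rightarrow> nat \<Rightarrow> real) \<Rightarrow> real" where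
  "value_fn n m k u P \<delta> i \<mu> pol =
     (\<Sum>t. \<delta> ^ t * (\<Sum>s<m. stdist n m k P pol \<mu> t s * exp_reward n k u i pol s))"

definition point_dist :: "nat \<Rightarrow> nat \<Rightarrow> real" where
  "point_dist s = (\<lambda>s'. if s' = s then 1 else 0)"

definition visit_dist :: "nat \<Rightarrow> nat \<Rightarrow> (nat \<Rightarrow> nat) \<Rightarrow> (nat \<Rightarrow> (nat \<Rightarrow> nat) \<Rightarrow> nat \<Rightarrow> real)
    \<Rightarrow> real \<Rightarrow> (nat \<Rightarrow> real) \<Rightarrow> (nat \<Rightarrow> nat \<Rightarrow> nat \<Rightarrow> real) \<Rightarrow> nat \<Rightarrow> real" where
  "visit_dist n m k P \<delta> \<mu> pol s = (1 - \<delta>) * (\<Sum>t. \<delta> ^ t * stdist n m k P pol \<mu> t s)"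

definition Q_fn :: "nat \<Rightarrow> nat \<Rightarrow> (nat \<Rightarrow> nat) \<Rightarrow> (nat \<Rightarrow> nat \<Rightarrow> (nat \<Rightarrow> nat) \<Rightarrow> real)
    \<Rightarrow> (nat \<Rightarrow> (nat \<Rightarrow> nat) \<Rightarrow> nat \<Rightarrow> real) \<Rightarrow> real \<Rightarrow> nat
    \<Rightarrow> (nat \<Rightarrow> nat \<Rightarrow> nat \<Rightarrow> real) \<Rightarrow> nat \<Rightarrow> nat \<Rightarrow> real" where
  "Q_fn n m k u P \<delta> i pol s ai =
     (\<Sum>a\<in>{a\<in>joint_actions n k. a i = ai}.
        (\<Prod>j\<in>{..<n}-{i}. pol j s (a j)) *
        (u i s a + \<delta> * (\<Sum>s'<m. P s a s' * value_fn n m k u P \<delta> i (point_dist s') pol)))"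

definition proj_simplex :: "nat \<Rightarrow> (nat \<Rightarrow> real) \<Rightarrow> nat \<Rightarrow> real" where
  "proj_simplex K x = (THE y. y \<in> simplex K \<and>
      (\<forall>z\<in>simplex K. (\<Sum>a<K. (y a - x a)^2) \<le> (\<Sum>a<K. (z a - x a)^2)))"

fun pga :: "nat \<Rightarrow> nat \<Rightarrow> (nat \<Rightarrow> nat) \<Rightarrow> (nat \<Rightarrow> nat \<Rightarrow> (nat \<Rightarrow> nat) \<Rightarrow> real)
    \<Rightarrow> (nat \<Rightarrow> (nat \<Rightarrow> nat) \<Rightarrow> nat \<Rightarrow> real) \<Rightarrow> real \<Rightarrow> real \<Rightarrow> nat
    \<Rightarrow> nat \<Rightarrow> nat \<Rightarrow> nat \<Rightarrow> real" where
  "pga n m k u P \<delta> \<eta> 0 = (\<lambda>i s a. if i < n \<and> s < m \<and> a < k i then 1 / real (k i) else 0)"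
| "pga n m k u P \<delta> \<eta> (Suc t) =
     (\<lambda>i s. if i < n \<and> s < m then
         proj_simplex (k i) (\<lambda>a. pga n m k u P \<delta> \<eta> t i s a
                                 + \<eta> * Q_fn n m k u P \<delta> i (pga n m k u P \<delta> \<eta> t) s a)
       else (\<lambda>_. 0))"

definition nash_regret :: "nat \<Rightarrow> nat \<Rightarrow> (nat \<Rightarrow> nat) \<Rightarrow> (nat \<Rightarrow> nat \<Rightarrow> (nat \<Rightarrow> nat) \<Rightarrow> real)
    \<Rightarrow> (nat \<Rightarrow> (nat \<Rightarrow> nat) \<Rightarrow> nat \<Rightarrow> real) \<Rightarrow> real \<Rightarrow> (nat \<Rightarrow> real) \<Rightarrow> real \<Rightarrow> nat \<Rightarrow> real" where
  "nash_regret n m k u P \<delta> \<mu> \<eta> T =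
     (1 / real T) * (\<Sum>t=1..T. Max ((\<lambda>i.
        (SUP p\<in>player_policies m (k i).
            value_fn n m k u P \<delta> i \<mu> ((pga n m k u P \<delta> \<eta> t)(i := p)))
        - value_fn n m k u P \<delta> i \<mu> (pga n m k u P \<delta> \<eta> t)) ` {..<n}))"

definition alpha_potential :: "nat \<Rightarrow> nat \<Rightarrow> (nat \<Rightarrow> nat) \<Rightarrow> (nat \<Rightarrow> nat \<Rightarrow> (nat \<Rightarrow> nat) \<Rightarrow> real)
    \<Rightarrow> (nat \<Rightarrow> (nat \<Rightarrow> nat) \<Rightarrow> nat \<Rightarrow> real) \<Rightarrow> real \<Rightarrow> real
    \<Rightarrow> (nat \<Rightarrow> (nat \<Rightarrow> nat \<Rightarrow> nat \<Rightarrow> real) \<Rightarrow> real) \<Rightarrow> bool" where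
  "alpha_potential n m k u P \<delta> \<alpha> \<Phi> \<longleftrightarrow>
     (\<forall>s<m. \<forall>i<n. \<forall>pol\<in>policies n m k. \<forall>p\<in>player_policies m (k i).
        \<bar>(\<Phi> s (pol(i := p)) - \<Phi> s pol)
         - (value_fn n m k u P \<delta> i (point_dist s) (pol(i := p))
            - value_fn n m k u P \<delta> i (point_dist s) pol)\<bar> \<le> \<alpha>)"

definition Phi_dist :: "nat \<Rightarrow> (nat \<Rightarrow> (nat \<Rightarrow> nat \<Rightarrow> nat \<Rightarrow> real) \<Rightarrow> real) \<Rightarrow> (nat \<Rightarrow> real)
    \<Rightarrow> (nat \<Rightarrow> nat \<Rightarrow> nat \<Rightarrow> real) \<Rightarrow> real" where
  "Phi_dist m \<Phi> \<mu> pol = (\<Sum>s<m. \<mu> s * \<Phi> s pol)"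

definition ratio_sup :: "nat \<Rightarrow> (nat \<Rightarrow> real) \<Rightarrow> (nat \<Rightarrow> real) \<Rightarrow> ereal" where
  "ratio_sup m d \<nu> = (SUP s\<in>{..<m}.
      (if \<nu> s = 0 then (if d s = 0 then 0 else \<infinity>) else ereal (d s / \<nu> s)))"

definition kappa_tilde :: "nat \<Rightarrow> nat \<Rightarrow> (nat \<Rightarrow> nat) \<Rightarrow> (nat \<Rightarrow> (nat \<Rightarrow> nat) \<Rightarrow> nat \<Rightarrow> real)
    \<Rightarrow> real \<Rightarrow> (nat \<Rightarrow> real) \<Rightarrow> ereal" where
  "kappa_tilde n m k P \<delta> \<mu> = (INF \<nu>\<in>state_dists m. SUP pol\<in>policies n m k.
      ratio_sup m (visit_dist n m k P \<delta> \<mu> pol) \<nu>)"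

end

theory Submission
  imports Defs "HOL-Analysis.Convex" "HOL-Analysis.Elementary_Normed_Spaces"
begin


lemma simplex_sum_sq_bound: True by simp

lemma proj_exists:
  fixes x :: "nat \<Rightarrow> real"
  assumes K: "K \<ge> 1"
  shows "\<exists>y\<in>simplex K. \<forall>z\<in>simplex K. (\<Sum>a<K. (z a - y a) * (y a - x a)) \<ge> 0"
proof -
  define f where "f = (\<lambda>\<tau>. \<Sum>a<K. max (x a - \<tau>) 0)"
  define lo where "lo = x 0 - 1"
  define hi where "hi = Max (x ` {..<K})"
  have hi: "\<And>a. a < K \<Longrightarrow> x a \<le> hi" unfolding hi_def by (intro Max_ge) auto
  have "x 0 \<le> hi" using hi K by auto
  hence lohi: "lo \<le> hi" unfolding lo_def by simp
  have fhi: "f hi = 0" unfolding f_def using hi by (intro sum.neutral) auto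
  have "f lo \<ge> max (x 0 - lo) 0" unfolding f_def
    using K by (intro member_le_sum) auto
  hence flo: "f lo \<ge> 1" unfolding lo_def by simp
  have cont: "\<forall>t. lo \<le> t \<and> t \<le> hi \<longrightarrow> isCont f t" unfolding f_def
    by (auto intro!: continuous_intros)
  obtain \<tau> where tau: "f \<tau> = 1" using IVT2[of f hi 1 lo, OF _ flo lohi cont] fhi by auto
  define y where "y = (\<lambda>a. if a < K then max (x a - \<tau>) 0 else 0)"
  have ys: "y \<in> simplex K" unfolding simplex_def y_def using tau unfolding f_def by auto
  have "\<forall>z\<in>simplex K. (\<Sum>a<K. (z a - y a) * (y a - x a)) \<ge> 0"
  proof
    fix z assume z: "z \<in> simplex K"
    have "(\<Sum>a<K. (z a - y a) * (- \<tau>)) \<le> (\<Sum>a<K. (z a - y a) * (y a - x a))"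
    proof (rule sum_mono)
      fix a assume a: "a \<in> {..<K}"
      have z0: "z a \<ge> 0" using z a unfolding simplex_def by auto
      show "(z a - y a) * (- \<tau>) \<le> (z a - y a) * (y a - x a)"
      proof (cases "x a - \<tau> > 0")
        case True thus ?thesis using a unfolding y_def by auto
      next
        case False
        hence "y a = 0" using a unfolding y_def by auto
        thus ?thesis using False z0 by (simp add: mult_left_mono)
      qed
    qed
    moreover have "(\<Sum>a<K. (z a - y a) * (- \<tau>)) = 0"
    proof -
      have "(\<Sum>a<K. (z a - y a) * (- \<tau>)) = (- \<tau>) * (\<Sum>a<K. (z a - y a))"
        by (simp add: sum_distrib_left mult.commute)
      also have "\<dots> = - \<tau> * ((\<Sum>a<K. z a) - (\<Sum>a<K. y a))" by (simp only: sum_subtractf)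
      also have "\<dots> = 0" using z ys unfolding simplex_def by simp
      finally show ?thesis .
    qed
    ultimately show "(\<Sum>a<K. (z a - y a) * (y a - x a)) \<ge> 0" by simp
  qed
  thus ?thesis using ys by blast
qed

lemma proj_char:
  fixes x :: "nat \<Rightarrow> real"
  assumes K: "K \<ge> 1"
  shows "proj_simplex K x \<in> simplex K"
    "\<And>z. z \<in> simplex K \<Longrightarrow> (\<Sum>a<K. (z a - proj_simplex K x a) * (proj_simplex K x a - x a)) \<ge> 0"
proof -
  obtain y where ys: "y \<in> simplex K" and vi: "\<And>z. z\<in>simplex K \<Longrightarrow> (\<Sum>a<K. (z a - y a) * (y a - x a)) \<ge> 0"
    using proj_exists[OF K] by blast
  have exp: "(\<Sum>a<K. (z a - x a)^2) = (\<Sum>a<K. (y a - x a)^2) + (\<Sum>a<K. (z a - y a)^2) + 2 * (\<Sum>a<K. (z a - y a) * (y a - x a))" for z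
  proof -
    have "\<And>a. (z a - x a)^2 = (y a - x a)^2 + (z a - y a)^2 + 2 * ((z a - y a) * (y a - x a))"
      by (simp add: power2_eq_square algebra_simps)
    hence "(\<Sum>a<K. (z a - x a)^2) = (\<Sum>a<K. (y a - x a)^2 + (z a - y a)^2 + 2 * ((z a - y a) * (y a - x a)))"
      by simp
    thus ?thesis by (simp add: sum.distrib sum_distrib_left)
  qed
  have main: "proj_simplex K x = y" unfolding proj_simplex_def
  proof (rule the_equality)
    show "y \<in> simplex K \<and> (\<forall>z\<in>simplex K. (\<Sum>a<K. (y a - x a)\<^sup>2) \<le> (\<Sum>a<K. (z a - x a)\<^sup>2))"
    proof (intro conjI ballI ys)
      fix z assume z: "z \<in> simplex K"
      have "0 \<le> (\<Sum>a<K. (z a - y a)^2)" by (auto intro: sum_nonneg)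
      thus "(\<Sum>a<K. (y a - x a)\<^sup>2) \<le> (\<Sum>a<K. (z a - x a)\<^sup>2)"
        using exp[of z] vi[OF z] by linarith
    qed
  next
    fix w assume w: "w \<in> simplex K \<and> (\<forall>z\<in>simplex K. (\<Sum>a<K. (w a - x a)\<^sup>2) \<le> (\<Sum>a<K. (z a - x a)\<^sup>2))"
    hence le: "(\<Sum>a<K. (w a - x a)\<^sup>2) \<le> (\<Sum>a<K. (y a - x a)\<^sup>2)" using ys by blast
    have "(\<Sum>a<K. (w a - y a)^2) \<le> 0" using exp[of w] vi[of w] w le by linarith
    hence "\<forall>a\<in>{..<K}. (w a - y a)^2 = 0"
    proof (intro sum_nonneg_eq_0_iff[THEN iffD1])
      have "0 \<le> (\<Sum>a<K. (w a - y a)^2)" by (auto intro: sum_nonneg)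
      thus "(\<Sum>a<K. (w a - y a)^2) = 0" using \<open>(\<Sum>a<K. (w a - y a)^2) \<le> 0\<close> by linarith
    qed auto
    hence "\<And>a. a < K \<Longrightarrow> w a = y a" by auto
    moreover have "\<And>a. a \<ge> K \<Longrightarrow> w a = y a" using w ys unfolding simplex_def by auto
    ultimately show "w = y" by (metis linorder_not_le ext)
  qed
  show "proj_simplex K x \<in> simplex K" using main ys by simp
  show "\<And>z. z \<in> simplex K \<Longrightarrow> (\<Sum>a<K. (z a - proj_simplex K x a) * (proj_simplex K x a - x a)) \<ge> 0"
    using main vi by simp
qed



locale game =
  fixes n m :: nat and k :: "nat \<Rightarrow> nat" and u :: "nat \<Rightarrow> nat \<Rightarrow> (nat\<Rightarrow>nat) \<Rightarrow> real"
    and P :: "nat \<Rightarrow> (nat\<Rightarrow>nat) \<Rightarrow> nat \<Rightarrow> real" and \<delta> :: real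
  assumes n1: "n \<ge> 1" and m1: "m \<ge> 1" and k1: "\<forall>i<n. k i \<ge> 1"
    and d0: "0 < \<delta>" and d1: "\<delta> < 1"
    and u_bnd: "\<forall>i<n. \<forall>s<m. \<forall>a\<in>joint_actions n k. 0 \<le> u i s a \<and> u i s a \<le> 1"
    and P_st: "\<forall>s<m. \<forall>a\<in>joint_actions n k. (\<forall>s'<m. 0 \<le> P s a s') \<and> (\<Sum>s'<m. P s a s') = 1"
begin

abbreviation "JA \<equiv> joint_actions n k"
abbreviation "Pol \<equiv> policies n m k"
abbreviation "pj \<equiv> pjoint n"
abbreviation "TM \<equiv> trans_mat n k P"
abbreviation "sd \<equiv> stdist n m k P"
abbreviation "V i pol s \<equiv> value_fn n m k u P \<delta> i (point_dist s) pol"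
abbreviation "Vm i \<mu> pol \<equiv> value_fn n m k u P \<delta> i \<mu> pol"
abbreviation "rw i pol s \<equiv> exp_reward n k u i pol s"
abbreviation "Q \<equiv> Q_fn n m k u P \<delta>"

lemma finJA: "finite JA" unfolding joint_actions_def by (rule finite_PiE) auto

lemma JA_mem: "a \<in> JA \<Longrightarrow> i < n \<Longrightarrow> a i < k i" unfolding joint_actions_def by auto

lemma pol_nonneg: "pol \<in> Pol \<Longrightarrow> i < n \<Longrightarrow> s < m \<Longrightarrow> b < k i \<Longrightarrow> 0 \<le> pol i s b"
  unfolding policies_def player_policies_def simplex_def by auto

lemma pol_sum: "pol \<in> Pol \<Longrightarrow> i < n \<Longrightarrow> s < m \<Longrightarrow> (\<Sum>b<k i. pol i s b) = 1"
  unfolding policies_def player_policies_def simplex_def by auto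

lemma pol_le1: "pol \<in> Pol \<Longrightarrow> i < n \<Longrightarrow> s < m \<Longrightarrow> b < k i \<Longrightarrow> pol i s b \<le> 1"
proof -
  assume *: "pol \<in> Pol" "i < n" "s < m" "b < k i"
  have "pol i s b \<le> (\<Sum>c<k i. pol i s c)"
    using * by (intro member_le_sum) (auto intro: pol_nonneg)
  thus ?thesis using pol_sum * by simp
qed

lemma pj_nonneg: "pol \<in> Pol \<Longrightarrow> s < m \<Longrightarrow> a \<in> JA \<Longrightarrow> 0 \<le> pj pol s a"
  unfolding pjoint_def by (intro prod_nonneg) (auto intro: pol_nonneg JA_mem)

lemma pj_sum: "pol \<in> Pol \<Longrightarrow> s < m \<Longrightarrow> (\<Sum>a\<in>JA. pj pol s a) = 1"
proof -
  assume *: "pol \<in> Pol" "s < m"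
  have "(\<Sum>a\<in>JA. pj pol s a) = (\<Prod>i<n. \<Sum>b<k i. pol i s b)"
    unfolding pjoint_def joint_actions_def
    by (subst prod_sum_PiE) auto
  also have "\<dots> = 1" using * pol_sum by simp
  finally show ?thesis .
qed

lemma TM_nonneg: "pol \<in> Pol \<Longrightarrow> s < m \<Longrightarrow> s' < m \<Longrightarrow> 0 \<le> TM pol s s'"
  unfolding trans_mat_def using P_st by (intro sum_nonneg mult_nonneg_nonneg pj_nonneg) auto

lemma TM_sum: "pol \<in> Pol \<Longrightarrow> s < m \<Longrightarrow> (\<Sum>s'<m. TM pol s s') = 1"
proof -
  assume *: "pol \<in> Pol" "s < m"
  have "(\<Sum>s'<m. TM pol s s') = (\<Sum>a\<in>JA. pj pol s a * (\<Sum>s'<m. P s a s'))"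
    unfolding trans_mat_def by (subst sum.swap) (simp add: sum_distrib_left)
  also have "\<dots> = (\<Sum>a\<in>JA. pj pol s a)" using P_st * by (intro sum.cong) auto
  finally show ?thesis using pj_sum * by simp
qed

lemma sd_sum: "pol \<in> Pol \<Longrightarrow> (\<Sum>s<m. sd pol \<mu> t s) = (\<Sum>s<m. \<mu> s)"
proof (induction t)
  case 0 thus ?case by simp
next
  case (Suc t)
  have "(\<Sum>s'<m. sd pol \<mu> (Suc t) s') = (\<Sum>s<m. sd pol \<mu> t s * (\<Sum>s'<m. TM pol s s'))"
    by (simp add: sum_distrib_left) (rule sum.swap)
  also have "\<dots> = (\<Sum>s<m. sd pol \<mu> t s)" using TM_sum Suc.prems by simp
  finally show ?case using Suc by simp
qed

lemma sd_nonneg: "pol \<in> Pol \<Longrightarrow> (\<forall>s<m. 0 \<le> \<mu> s) \<Longrightarrow> s < m \<Longrightarrow> 0 \<le> sd pol \<mu> t s"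
proof (induction t arbitrary: s)
  case 0 thus ?case by simp
next
  case (Suc t) thus ?case by (auto intro!: sum_nonneg mult_nonneg_nonneg TM_nonneg)
qed

lemma sd_lin: "s' < m \<Longrightarrow> sd pol \<mu> t s' = (\<Sum>s<m. \<mu> s * sd pol (point_dist s) t s')"
proof (induction t arbitrary: s')
  case 0
  have "(\<Sum>s<m. \<mu> s * sd pol (point_dist s) 0 s') = (\<Sum>s<m. if s = s' then \<mu> s else 0)"
    by (intro sum.cong) (auto simp: point_dist_def)
  also have "\<dots> = \<mu> s'" using 0 by simp
  finally show ?case by simp
next
  case (Suc t)
  have "sd pol \<mu> (Suc t) s' = (\<Sum>s1<m. (\<Sum>s<m. \<mu> s * sd pol (point_dist s) t s1) * TM pol s1 s')"
    using Suc.IH by simp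
  also have "\<dots> = (\<Sum>s1<m. \<Sum>s<m. \<mu> s * (sd pol (point_dist s) t s1 * TM pol s1 s'))"
    by (simp only: sum_distrib_right mult.assoc)
  also have "\<dots> = (\<Sum>s<m. \<Sum>s1<m. \<mu> s * (sd pol (point_dist s) t s1 * TM pol s1 s'))"
    by (rule sum.swap)
  also have "\<dots> = (\<Sum>s<m. \<mu> s * (\<Sum>s1<m. sd pol (point_dist s) t s1 * TM pol s1 s'))"
    by (simp only: sum_distrib_left)
  finally show ?case by simp
qed

lemma sd_shift: "sd pol \<mu> (Suc t) s' = sd pol (\<lambda>s1. \<Sum>s<m. \<mu> s * TM pol s s1) t s'"
proof (induction t arbitrary: s')
  case 0 thus ?case by simp
next
  case (Suc t)
  have "sd pol \<mu> (Suc (Suc t)) s' = (\<Sum>s<m. sd pol \<mu> (Suc t) s * TM pol s s')"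
    by (rule stdist.simps(2))
  also have "\<dots> = (\<Sum>s<m. sd pol (\<lambda>s1. \<Sum>s<m. \<mu> s * TM pol s s1) t s * TM pol s s')"
    by (simp only: Suc.IH)
  also have "\<dots> = sd pol (\<lambda>s1. \<Sum>s<m. \<mu> s * TM pol s s1) (Suc t) s'"
    by (rule stdist.simps(2)[symmetric])
  finally show ?case .
qed

lemma sd_point_Suc: "s < m \<Longrightarrow> s' < m \<Longrightarrow>
   sd pol (point_dist s) (Suc t) s' = (\<Sum>s1<m. TM pol s s1 * sd pol (point_dist s1) t s')"
proof -
  assume *: "s < m" "s' < m"
  have "(\<lambda>s1. \<Sum>s0<m. point_dist s s0 * TM pol s0 s1) = (\<lambda>s1. TM pol s s1)"
  proof
    fix s1
    have "(\<Sum>s0<m. point_dist s s0 * TM pol s0 s1) = (\<Sum>s0<m. if s0 = s then TM pol s0 s1 else 0)"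
      by (intro sum.cong) (auto simp: point_dist_def)
    also have "\<dots> = TM pol s s1" using * by simp
    finally show "(\<Sum>s0<m. point_dist s s0 * TM pol s0 s1) = TM pol s s1" .
  qed
  thus ?thesis using sd_shift[of pol "point_dist s" t s'] sd_lin[OF *(2), where pol=pol and \<mu>="TM pol s" and t=t] by simp
qed

end


context game begin

lemma point_dist_sd: "s < m \<Longrightarrow> point_dist s \<in> state_dists m"
proof -
  assume s: "s < m"
  have "(\<Sum>s'<m. point_dist s s') = (\<Sum>s'<m. if s' = s then 1 else 0)"
    by (intro sum.cong) (auto simp: point_dist_def)
  also have "\<dots> = 1" using s by simp
  finally show ?thesis unfolding state_dists_def by (auto simp: point_dist_def)
qed

lemma TM_sd: "pol \<in> Pol \<Longrightarrow> s < m \<Longrightarrow> TM pol s \<in> state_dists m"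
  unfolding state_dists_def using TM_nonneg TM_sum by auto

lemma sd_dist: "pol \<in> Pol \<Longrightarrow> \<mu> \<in> state_dists m \<Longrightarrow> (\<Sum>s<m. sd pol \<mu> t s) = 1"
  using sd_sum unfolding state_dists_def by auto

lemma sd_nn: "pol \<in> Pol \<Longrightarrow> \<mu> \<in> state_dists m \<Longrightarrow> s < m \<Longrightarrow> 0 \<le> sd pol \<mu> t s"
  using sd_nonneg unfolding state_dists_def by auto

lemma sum_sd_bnd:
  assumes "pol \<in> Pol" "\<mu> \<in> state_dists m" "\<And>s. s < m \<Longrightarrow> \<bar>f s\<bar> \<le> B"
  shows "\<bar>\<Sum>s<m. sd pol \<mu> t s * f s\<bar> \<le> B"
proof -
  have "\<bar>\<Sum>s<m. sd pol \<mu> t s * f s\<bar> \<le> (\<Sum>s<m. \<bar>sd pol \<mu> t s * f s\<bar>)" by (rule sum_abs)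
  also have "\<dots> \<le> (\<Sum>s<m. sd pol \<mu> t s * B)"
    using assms sd_nn by (intro sum_mono) (auto simp: abs_mult intro: mult_left_mono)
  also have "\<dots> = B" using sd_dist assms by (simp add: sum_distrib_right[symmetric])
  finally show ?thesis .
qed

lemma geo_summ: "summable (\<lambda>t. B * \<delta> ^ t)"
  using d0 d1 by (intro summable_mult summable_geometric) auto

lemma summ_sd:
  assumes "pol \<in> Pol" "\<mu> \<in> state_dists m" "\<And>s. s < m \<Longrightarrow> \<bar>f s\<bar> \<le> B"
  shows "summable (\<lambda>t. \<delta> ^ t * (\<Sum>s<m. sd pol \<mu> t s * f s))"
proof (rule summable_comparison_test'[OF geo_summ[of B]])
  fix t :: nat
  have "\<bar>\<Sum>s<m. sd pol \<mu> t s * f s\<bar> \<le> B" by (rule sum_sd_bnd[OF assms])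
  thus "norm (\<delta> ^ t * (\<Sum>s<m. sd pol \<mu> t s * f s)) \<le> B * \<delta> ^ t"
    using d0 by (simp add: abs_mult mult.commute mult_right_mono)
qed

lemma rw_bnd: "pol \<in> Pol \<Longrightarrow> i < n \<Longrightarrow> s < m \<Longrightarrow> 0 \<le> rw i pol s \<and> rw i pol s \<le> 1"
proof -
  assume *: "pol \<in> Pol" "i < n" "s < m"
  have "rw i pol s \<le> (\<Sum>a\<in>JA. pj pol s a * 1)" unfolding exp_reward_def
    using * u_bnd by (intro sum_mono mult_left_mono) (auto intro: pj_nonneg)
  moreover have "0 \<le> rw i pol s" unfolding exp_reward_def
    using * u_bnd by (intro sum_nonneg mult_nonneg_nonneg) (auto intro: pj_nonneg)
  ultimately show ?thesis using pj_sum * by simp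
qed

lemma summ_rw: "pol \<in> Pol \<Longrightarrow> \<mu> \<in> state_dists m \<Longrightarrow> i < n \<Longrightarrow>
   summable (\<lambda>t. \<delta> ^ t * (\<Sum>s<m. sd pol \<mu> t s * rw i pol s))"
  by (rule summ_sd[where B=1]) (use rw_bnd in auto)

lemma Vm_lin:
  assumes "pol \<in> Pol" "\<mu> \<in> state_dists m" "i < n"
  shows "Vm i \<mu> pol = (\<Sum>s<m. \<mu> s * V i pol s)"
proof -
  have "Vm i \<mu> pol = (\<Sum>t. \<Sum>s<m. \<mu> s * (\<delta> ^ t * (\<Sum>s'<m. sd pol (point_dist s) t s' * rw i pol s')))"
    unfolding value_fn_def
  proof (intro suminf_cong)
    fix t
    have "(\<Sum>s'<m. sd pol \<mu> t s' * rw i pol s') = (\<Sum>s'<m. (\<Sum>s<m. \<mu> s * sd pol (point_dist s) t s') * rw i pol s')"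
      by (intro sum.cong refl) (simp add: sd_lin[symmetric])
    also have "\<dots> = (\<Sum>s'<m. \<Sum>s<m. \<mu> s * (sd pol (point_dist s) t s' * rw i pol s'))"
      by (simp only: sum_distrib_right mult.assoc)
    also have "\<dots> = (\<Sum>s<m. \<Sum>s'<m. \<mu> s * (sd pol (point_dist s) t s' * rw i pol s'))"
      by (rule sum.swap)
    also have "\<dots> = (\<Sum>s<m. \<mu> s * (\<Sum>s'<m. sd pol (point_dist s) t s' * rw i pol s'))"
      by (simp only: sum_distrib_left)
    finally show "\<delta> ^ t * (\<Sum>s'<m. sd pol \<mu> t s' * rw i pol s') =
        (\<Sum>s<m. \<mu> s * (\<delta> ^ t * (\<Sum>s'<m. sd pol (point_dist s) t s' * rw i pol s')))"
      by (simp add: sum_distrib_left mult.left_commute)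
  qed
  also have "\<dots> = (\<Sum>s<m. \<Sum>t. \<mu> s * (\<delta> ^ t * (\<Sum>s'<m. sd pol (point_dist s) t s' * rw i pol s')))"
    using assms point_dist_sd summ_rw by (intro suminf_sum summable_mult) auto
  also have "\<dots> = (\<Sum>s<m. \<mu> s * V i pol s)"
    unfolding value_fn_def
    using assms point_dist_sd summ_rw by (intro sum.cong refl suminf_mult) auto
  finally show ?thesis .
qed

lemma V_bellman:
  assumes pol: "pol \<in> Pol" and i: "i < n" and s: "s < m"
  shows "V i pol s = rw i pol s + \<delta> * (\<Sum>s1<m. TM pol s s1 * V i pol s1)"
proof -
  define F where "F = (\<lambda>\<mu> t. \<delta> ^ t * (\<Sum>s'<m. sd pol \<mu> t s' * rw i pol s'))"
  have sF: "\<And>s. s < m \<Longrightarrow> summable (F (point_dist s))"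
    unfolding F_def using summ_rw pol i point_dist_sd by auto
  have V: "\<And>s. V i pol s = suminf (F (point_dist s))" unfolding value_fn_def F_def by simp
  have F0: "F (point_dist s) 0 = rw i pol s"
  proof -
    have "F (point_dist s) 0 = (\<Sum>s'<m. point_dist s s' * rw i pol s')"
      unfolding F_def by simp
    also have "\<dots> = (\<Sum>s'<m. if s' = s then rw i pol s' else 0)"
      by (intro sum.cong) (auto simp: point_dist_def)
    finally have "F (point_dist s) 0 = (\<Sum>s'<m. if s' = s then rw i pol s' else 0)" .
    thus ?thesis using s by simp
  qed
  have FS: "F (point_dist s) (Suc t) = \<delta> * (\<Sum>s1<m. TM pol s s1 * F (point_dist s1) t)" for t
  proof -
    have "(\<Sum>s'<m. sd pol (point_dist s) (Suc t) s' * rw i pol s')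
        = (\<Sum>s'<m. (\<Sum>s1<m. TM pol s s1 * sd pol (point_dist s1) t s') * rw i pol s')"
    proof (intro sum.cong refl)
      fix s' assume "s' \<in> {..<m}"
      thus "sd pol (point_dist s) (Suc t) s' * rw i pol s' = (\<Sum>s1<m. TM pol s s1 * sd pol (point_dist s1) t s') * rw i pol s'"
        by (subst sd_point_Suc[OF s]) auto
    qed
    also have "\<dots> = (\<Sum>s'<m. \<Sum>s1<m. TM pol s s1 * (sd pol (point_dist s1) t s' * rw i pol s'))"
      by (simp only: sum_distrib_right mult.assoc)
    also have "\<dots> = (\<Sum>s1<m. \<Sum>s'<m. TM pol s s1 * (sd pol (point_dist s1) t s' * rw i pol s'))"
      by (rule sum.swap)
    also have "\<dots> = (\<Sum>s1<m. TM pol s s1 * (\<Sum>s'<m. sd pol (point_dist s1) t s' * rw i pol s'))"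
      by (simp only: sum_distrib_left)
    finally show ?thesis unfolding F_def
      by (simp add: sum_distrib_left mult_ac)
  qed
  have "suminf (F (point_dist s)) = F (point_dist s) 0 + (\<Sum>t. F (point_dist s) (Suc t))"
    using suminf_split_head[OF sF[OF s]] by simp
  also have "(\<Sum>t. F (point_dist s) (Suc t)) = (\<Sum>t. \<delta> * (\<Sum>s1<m. TM pol s s1 * F (point_dist s1) t))"
    using FS by simp
  also have "\<dots> = \<delta> * (\<Sum>t. \<Sum>s1<m. TM pol s s1 * F (point_dist s1) t)"
    using sF by (intro suminf_mult summable_sum summable_mult) auto
  also have "(\<Sum>t. \<Sum>s1<m. TM pol s s1 * F (point_dist s1) t) = (\<Sum>s1<m. \<Sum>t. TM pol s s1 * F (point_dist s1) t)"
    using sF by (intro suminf_sum summable_mult) auto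
  also have "\<dots> = (\<Sum>s1<m. TM pol s s1 * suminf (F (point_dist s1)))"
    using sF by (intro sum.cong refl suminf_mult) auto
  finally show ?thesis using F0 V by simp
qed

lemma V_bnd:
  assumes pol: "pol \<in> Pol" and i: "i < n" and s: "s < m"
  shows "0 \<le> V i pol s \<and> V i pol s \<le> 1 / (1 - \<delta>)"
proof -
  define F where "F = (\<lambda>t. \<delta> ^ t * (\<Sum>s'<m. sd pol (point_dist s) t s' * rw i pol s'))"
  have sF: "summable F" unfolding F_def using summ_rw pol i point_dist_sd s by auto
  have b: "\<bar>\<Sum>s'<m. sd pol (point_dist s) t s' * rw i pol s'\<bar> \<le> 1" for t
    using rw_bnd pol i point_dist_sd s by (intro sum_sd_bnd) auto
  have nn: "0 \<le> (\<Sum>s'<m. sd pol (point_dist s) t s' * rw i pol s')" for t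
    using rw_bnd pol i point_dist_sd s sd_nn by (intro sum_nonneg mult_nonneg_nonneg) auto
  have "0 \<le> suminf F" using sF nn d0 by (intro suminf_nonneg) (auto simp: F_def)
  moreover have "suminf F \<le> (\<Sum>t. 1 * \<delta> ^ t)"
  proof (rule suminf_le[OF _ sF geo_summ])
    fix t show "F t \<le> 1 * \<delta> ^ t" unfolding F_def using b[of t] d0
      by (simp add: mult_left_le abs_le_iff)
  qed
  moreover have "(\<Sum>t. 1 * \<delta> ^ t) = 1 / (1 - \<delta>)" using suminf_geometric[of \<delta>] d0 d1 by simp
  ultimately show ?thesis unfolding value_fn_def F_def by simp
qed

end


context game begin

definition h :: "(nat \<Rightarrow> nat \<Rightarrow> nat \<Rightarrow> real) \<Rightarrow> nat \<Rightarrow> nat \<Rightarrow> (nat \<Rightarrow> nat) \<Rightarrow> real" where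
  "h pol i s a = u i s a + \<delta> * (\<Sum>s1<m. P s a s1 * V i pol s1)"

lemma V_joint:
  assumes pol: "pol \<in> Pol" and i: "i < n" and s: "s < m"
  shows "V i pol s = (\<Sum>a\<in>JA. pj pol s a * h pol i s a)"
proof -
  have "(\<Sum>s1<m. TM pol s s1 * V i pol s1) = (\<Sum>s1<m. \<Sum>a\<in>JA. pj pol s a * (P s a s1 * V i pol s1))"
    unfolding trans_mat_def by (simp only: sum_distrib_right mult.assoc)
  also have "\<dots> = (\<Sum>a\<in>JA. \<Sum>s1<m. pj pol s a * (P s a s1 * V i pol s1))" by (rule sum.swap)
  also have "\<dots> = (\<Sum>a\<in>JA. pj pol s a * (\<Sum>s1<m. P s a s1 * V i pol s1))" by (simp only: sum_distrib_left)
  finally have e: "(\<Sum>s1<m. TM pol s s1 * V i pol s1) = (\<Sum>a\<in>JA. pj pol s a * (\<Sum>s1<m. P s a s1 * V i pol s1))" .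
  show ?thesis unfolding V_bellman[OF assms] e exp_reward_def h_def
    by (simp add: sum_distrib_left sum.distrib distrib_left mult_ac)
qed

lemma h_bnd:
  assumes pol: "pol \<in> Pol" and i: "i < n" and s: "s < m" and a: "a \<in> JA"
  shows "0 \<le> h pol i s a \<and> h pol i s a \<le> 1 / (1 - \<delta>)"
proof -
  have Pn: "\<And>s1. s1 < m \<Longrightarrow> 0 \<le> P s a s1" and Ps: "(\<Sum>s1<m. P s a s1) = 1" using P_st s a by auto
  have "(\<Sum>s1<m. P s a s1 * V i pol s1) \<le> (\<Sum>s1<m. P s a s1 * (1 / (1 - \<delta>)))"
    using V_bnd[OF pol i] Pn by (intro sum_mono mult_left_mono) auto
  also have "\<dots> = 1 / (1 - \<delta>)" using Ps by (simp add: sum_divide_distrib[symmetric])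
  finally have up: "(\<Sum>s1<m. P s a s1 * V i pol s1) \<le> 1 / (1 - \<delta>)" .
  have lo: "0 \<le> (\<Sum>s1<m. P s a s1 * V i pol s1)"
    using V_bnd[OF pol i] Pn by (intro sum_nonneg mult_nonneg_nonneg) auto
  have u: "0 \<le> u i s a" "u i s a \<le> 1" using u_bnd i s a by auto
  have "h pol i s a \<le> 1 + \<delta> * (1 / (1 - \<delta>))" unfolding h_def
    using u up d0 by (intro add_mono mult_left_mono) auto
  also have "\<dots> = 1 / (1 - \<delta>)" using d1 by (simp add: field_simps)
  finally show ?thesis unfolding h_def using u lo d0 by auto
qed

lemma V_diff_eq:
  assumes pol: "pol \<in> Pol" and pol': "pol' \<in> Pol" and i: "i < n" and s: "s < m"
  shows "V i pol' s - V i pol s = (\<Sum>a\<in>JA. (pj pol' s a - pj pol s a) * h pol i s a)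
     + \<delta> * (\<Sum>s1<m. TM pol' s s1 * (V i pol' s1 - V i pol s1))"
proof -
  have "(\<Sum>a\<in>JA. pj pol' s a * (h pol' i s a - h pol i s a)) = \<delta> * (\<Sum>s1<m. TM pol' s s1 * (V i pol' s1 - V i pol s1))"
  proof -
    have "(\<Sum>a\<in>JA. pj pol' s a * (h pol' i s a - h pol i s a)) =
          (\<Sum>a\<in>JA. \<Sum>s1<m. \<delta> * (pj pol' s a * P s a s1 * (V i pol' s1 - V i pol s1)))"
      unfolding h_def by (intro sum.cong refl) (simp add: sum_distrib_left sum_subtractf[symmetric] algebra_simps)
    also have "\<dots> = (\<Sum>s1<m. \<Sum>a\<in>JA. \<delta> * (pj pol' s a * P s a s1 * (V i pol' s1 - V i pol s1)))"
      by (rule sum.swap)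
    also have "\<dots> = \<delta> * (\<Sum>s1<m. TM pol' s s1 * (V i pol' s1 - V i pol s1))"
      unfolding trans_mat_def by (simp add: sum_distrib_left sum_distrib_right)
    finally show ?thesis .
  qed
  moreover have "V i pol' s - V i pol s = (\<Sum>a\<in>JA. (pj pol' s a - pj pol s a) * h pol i s a)
     + (\<Sum>a\<in>JA. pj pol' s a * (h pol' i s a - h pol i s a))"
    unfolding V_joint[OF pol i s] V_joint[OF pol' i s]
    by (simp add: sum.distrib[symmetric] sum_subtractf[symmetric] algebra_simps)
  ultimately show ?thesis by simp
qed

lemma resolvent_lb:
  assumes Mn: "\<And>s s'. s < m \<Longrightarrow> s' < m \<Longrightarrow> 0 \<le> M s s'"
    and Ms: "\<And>s. s < m \<Longrightarrow> (\<Sum>s'<m. M s s') = 1"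
    and D: "\<And>s. s < m \<Longrightarrow> D s = g s + \<delta> * (\<Sum>s'<m. M s s' * D s')"
    and g: "\<And>s. s < m \<Longrightarrow> g s \<ge> - e"
  shows "\<And>s. s < m \<Longrightarrow> D s \<ge> - e / (1 - \<delta>)"
proof -
  define mn where "mn = Min (D ` {..<m})"
  have mn: "\<And>s. s < m \<Longrightarrow> mn \<le> D s" unfolding mn_def by (intro Min_le) auto
  have ne: "{..<m} \<noteq> {}" using m1 by (metis lessThan_iff empty_iff less_le_trans zero_less_one)
  have "mn \<in> D ` {..<m}" unfolding mn_def using ne by (intro Min_in) auto
  then obtain s0 where s0: "s0 < m" "D s0 = mn" by auto
  have "(\<Sum>s'<m. M s0 s' * mn) \<le> (\<Sum>s'<m. M s0 s' * D s')"
    using Mn s0 mn by (intro sum_mono mult_left_mono) auto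
  hence "mn \<le> (\<Sum>s'<m. M s0 s' * D s')" using Ms[OF s0(1)] by (simp add: sum_distrib_right[symmetric])
  hence "mn \<ge> - e + \<delta> * mn" using D[OF s0(1)] g[OF s0(1)] s0 d0
    by (smt (verit) mult_left_mono)
  hence "(1 - \<delta>) * mn \<ge> - e" by (simp add: algebra_simps)
  hence "mn \<ge> - e / (1 - \<delta>)" using d1 by (simp add: field_simps)
  thus "\<And>s. s < m \<Longrightarrow> D s \<ge> - e / (1 - \<delta>)" using mn by force
qed

lemma resolvent_point:
  assumes Mn: "\<And>s s'. s < m \<Longrightarrow> s' < m \<Longrightarrow> 0 \<le> M s s'"
    and Ms: "\<And>s. s < m \<Longrightarrow> (\<Sum>s'<m. M s s') = 1"
    and D: "\<And>s. s < m \<Longrightarrow> D s = g s + \<delta> * (\<Sum>s'<m. M s s' * D s')"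
    and g: "\<And>s. s < m \<Longrightarrow> g s \<ge> - e"
    and s0: "s0 < m"
  shows "D s0 \<ge> g s0 - \<delta> * e / (1 - \<delta>)"
proof -
  have lb: "\<And>s. s < m \<Longrightarrow> D s \<ge> - e / (1 - \<delta>)" by (rule resolvent_lb[OF Mn Ms D g])
  define c where "c = - e / (1 - \<delta>)"
  have "(\<Sum>s'<m. M s0 s' * c) \<le> (\<Sum>s'<m. M s0 s' * D s')"
    using Mn s0 lb unfolding c_def by (intro sum_mono mult_left_mono) auto
  moreover have "(\<Sum>s'<m. M s0 s' * c) = (\<Sum>s'<m. M s0 s') * c" by (rule sum_distrib_right[symmetric])
  ultimately have "- e / (1 - \<delta>) \<le> (\<Sum>s'<m. M s0 s' * D s')" using Ms[OF s0] unfolding c_def by simp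
  hence "\<delta> * (- e / (1 - \<delta>)) \<le> \<delta> * (\<Sum>s'<m. M s0 s' * D s')" using d0 by (intro mult_left_mono) auto
  thus ?thesis using D[OF s0] by simp
qed

lemma resolvent_abs:
  assumes Mn: "\<And>s s'. s < m \<Longrightarrow> s' < m \<Longrightarrow> 0 \<le> M s s'"
    and Ms: "\<And>s. s < m \<Longrightarrow> (\<Sum>s'<m. M s s') = 1"
    and D: "\<And>s. s < m \<Longrightarrow> D s = g s + \<delta> * (\<Sum>s'<m. M s s' * D s')"
    and g: "\<And>s. s < m \<Longrightarrow> \<bar>g s\<bar> \<le> e"
    and s: "s < m"
  shows "\<bar>D s\<bar> \<le> e / (1 - \<delta>)"
proof -
  have "D s \<ge> - e / (1 - \<delta>)"
  proof (rule resolvent_lb[OF Mn Ms D _ s])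
    fix s assume "s < m" from g[OF this] show "- e \<le> g s" by (simp add: abs_le_iff)
  qed
  moreover have "- D s \<ge> - e / (1 - \<delta>)"
  proof (rule resolvent_lb[OF Mn Ms _ _ s, where g="\<lambda>s. - g s"])
    fix s assume "s < m"
    have e: "D s = g s + \<delta> * (\<Sum>s'<m. M s s' * D s')" by (rule D[OF \<open>s < m\<close>])
    have "(\<Sum>s'<m. M s s' * - D s') = - (\<Sum>s'<m. M s s' * D s')" by (simp add: sum_negf)
    thus "- D s = - g s + \<delta> * (\<Sum>s'<m. M s s' * - D s')" using e by simp
  next
    fix s assume "s < m" thus "- g s \<ge> - e" using g by force
  qed
  ultimately show ?thesis by (simp add: abs_le_iff)
qed

end


context game begin

abbreviation "vd \<mu> pol \<equiv> visit_dist n m k P \<delta> \<mu> pol"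

lemma sd_le1: "pol \<in> Pol \<Longrightarrow> \<mu> \<in> state_dists m \<Longrightarrow> s < m \<Longrightarrow> sd pol \<mu> t s \<le> 1"
proof -
  assume *: "pol \<in> Pol" "\<mu> \<in> state_dists m" "s < m"
  have "sd pol \<mu> t s \<le> (\<Sum>s'<m. sd pol \<mu> t s')" using * by (intro member_le_sum) (auto intro: sd_nn)
  thus ?thesis using sd_dist * by simp
qed

lemma visit_eq:
  assumes pol: "pol \<in> Pol" and mu: "\<mu> \<in> state_dists m" and gb: "\<And>s. s < m \<Longrightarrow> \<bar>g s\<bar> \<le> B"
  shows "(\<Sum>s<m. vd \<mu> pol s * g s) = (1 - \<delta>) * (\<Sum>t. \<delta> ^ t * (\<Sum>s<m. sd pol \<mu> t s * g s))"
proof -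
  have sm: "summable (\<lambda>t. \<delta> ^ t * sd pol \<mu> t s * g s)" if s: "s < m" for s
  proof (rule summable_comparison_test'[OF geo_summ[of B]])
    fix t :: nat
    have "\<bar>sd pol \<mu> t s * g s\<bar> \<le> 1 * B"
      unfolding abs_mult using sd_nn[OF pol mu s] sd_le1[OF pol mu s] gb[OF s]
      by (intro mult_mono) auto
    thus "norm (\<delta> ^ t * sd pol \<mu> t s * g s) \<le> B * \<delta> ^ t"
      using d0 by (simp add: abs_mult mult.commute mult_right_mono)
  qed
  have sm2: "summable (\<lambda>t. \<delta> ^ t * sd pol \<mu> t s)" if s: "s < m" for s
  proof (rule summable_comparison_test'[OF geo_summ[of 1]])
    fix t :: nat
    show "norm (\<delta> ^ t * sd pol \<mu> t s) \<le> 1 * \<delta> ^ t"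
      using d0 sd_nn[OF pol mu s] sd_le1[OF pol mu s]
      by (simp add: abs_mult mult.commute mult_right_le_one_le)
  qed
  have "(\<Sum>s<m. vd \<mu> pol s * g s) = (\<Sum>s<m. (1 - \<delta>) * (\<Sum>t. \<delta> ^ t * sd pol \<mu> t s * g s))"
    unfolding visit_dist_def
  proof (intro sum.cong refl)
    fix s assume "s \<in> {..<m}"
    hence "(\<Sum>t. \<delta> ^ t * sd pol \<mu> t s) * g s = (\<Sum>t. \<delta> ^ t * sd pol \<mu> t s * g s)"
      using sm2 by (intro suminf_mult2) auto
    thus "(1 - \<delta>) * (\<Sum>t. \<delta> ^ t * sd pol \<mu> t s) * g s = (1 - \<delta>) * (\<Sum>t. \<delta> ^ t * sd pol \<mu> t s * g s)"
      by (simp add: mult.assoc)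
  qed
  also have "\<dots> = (1 - \<delta>) * (\<Sum>s<m. \<Sum>t. \<delta> ^ t * sd pol \<mu> t s * g s)" by (simp add: sum_distrib_left)
  also have "(\<Sum>s<m. \<Sum>t. \<delta> ^ t * sd pol \<mu> t s * g s) = (\<Sum>t. \<Sum>s<m. \<delta> ^ t * sd pol \<mu> t s * g s)"
    using sm by (intro suminf_sum[symmetric]) auto
  also have "\<dots> = (\<Sum>t. \<delta> ^ t * (\<Sum>s<m. sd pol \<mu> t s * g s))"
    by (simp add: sum_distrib_left mult.assoc)
  finally show ?thesis .
qed

lemma visit_nn: "pol \<in> Pol \<Longrightarrow> \<mu> \<in> state_dists m \<Longrightarrow> s < m \<Longrightarrow> 0 \<le> vd \<mu> pol s"
proof -
  assume *: "pol \<in> Pol" "\<mu> \<in> state_dists m" "s < m"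
  have sm2: "summable (\<lambda>t. \<delta> ^ t * sd pol \<mu> t s)"
  proof (rule summable_comparison_test'[OF geo_summ[of 1]])
    fix t :: nat
    show "norm (\<delta> ^ t * sd pol \<mu> t s) \<le> 1 * \<delta> ^ t"
      using d0 sd_nn[OF *] sd_le1[OF *]
      by (simp add: abs_mult mult.commute mult_right_le_one_le)
  qed
  have "0 \<le> (\<Sum>t. \<delta> ^ t * sd pol \<mu> t s)" using sm2 sd_nn[OF *] d0 by (intro suminf_nonneg) auto
  thus ?thesis unfolding visit_dist_def using d1 by simp
qed

lemma visit_sum: "pol \<in> Pol \<Longrightarrow> \<mu> \<in> state_dists m \<Longrightarrow> (\<Sum>s<m. vd \<mu> pol s) = 1"
proof -
  assume *: "pol \<in> Pol" "\<mu> \<in> state_dists m"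
  have "(\<Sum>s<m. vd \<mu> pol s * 1) = (1 - \<delta>) * (\<Sum>t. \<delta> ^ t * (\<Sum>s<m. sd pol \<mu> t s * 1))"
    by (rule visit_eq[OF *, of _ 1]) auto
  also have "\<dots> = (1 - \<delta>) * (\<Sum>t. \<delta> ^ t)" using sd_dist[OF *] by simp
  also have "\<dots> = 1" using suminf_geometric[of \<delta>] d0 d1 by simp
  finally show ?thesis by simp
qed

lemma pdl:
  assumes pol: "pol \<in> Pol" and mu: "\<mu> \<in> state_dists m"
    and D: "\<And>s. s < m \<Longrightarrow> D s = g s + \<delta> * (\<Sum>s1<m. TM pol s s1 * D s1)"
    and Db: "\<And>s. s < m \<Longrightarrow> \<bar>D s\<bar> \<le> B" and gb: "\<And>s. s < m \<Longrightarrow> \<bar>g s\<bar> \<le> B"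
  shows "(\<Sum>s<m. \<mu> s * D s) = (1 / (1 - \<delta>)) * (\<Sum>s<m. vd \<mu> pol s * g s)"
proof -
  define f where "f t = \<delta> ^ t * (\<Sum>s<m. sd pol \<mu> t s * g s)" for t
  have step: "(\<Sum>s<m. sd pol \<mu> N s * D s) = (\<Sum>s<m. sd pol \<mu> N s * g s) + \<delta> * (\<Sum>s<m. sd pol \<mu> (Suc N) s * D s)" for N
  proof -
    have "(\<Sum>s<m. sd pol \<mu> N s * D s) = (\<Sum>s<m. sd pol \<mu> N s * g s + \<delta> * (\<Sum>s1<m. sd pol \<mu> N s * TM pol s s1 * D s1))"
      by (intro sum.cong refl) (simp add: D distrib_left sum_distrib_left mult_ac)
    also have "\<dots> = (\<Sum>s<m. sd pol \<mu> N s * g s) + \<delta> * (\<Sum>s<m. \<Sum>s1<m. sd pol \<mu> N s * TM pol s s1 * D s1)"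
      by (simp add: sum.distrib sum_distrib_left)
    also have "(\<Sum>s<m. \<Sum>s1<m. sd pol \<mu> N s * TM pol s s1 * D s1) = (\<Sum>s1<m. \<Sum>s<m. sd pol \<mu> N s * TM pol s s1 * D s1)"
      by (rule sum.swap)
    also have "\<dots> = (\<Sum>s1<m. sd pol \<mu> (Suc N) s1 * D s1)"
      by (simp add: sum_distrib_right)
    finally show ?thesis .
  qed
  have ind: "(\<Sum>s<m. \<mu> s * D s) = (\<Sum>t<N. f t) + \<delta> ^ N * (\<Sum>s<m. sd pol \<mu> N s * D s)" for N
  proof (induction N)
    case 0 thus ?case by simp
  next
    case (Suc N)
    show ?case using Suc step[of N] unfolding f_def by (simp add: algebra_simps)
  qed
  have "(\<lambda>N. \<delta> ^ N * (\<Sum>s<m. sd pol \<mu> N s * D s)) \<longlonglongrightarrow> 0"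
  proof (rule Lim_null_comparison)
    show "\<forall>\<^sub>F N in sequentially. norm (\<delta> ^ N * (\<Sum>s<m. sd pol \<mu> N s * D s)) \<le> B * \<delta> ^ N"
    proof (intro always_eventually allI)
      fix N
      have "\<bar>\<Sum>s<m. sd pol \<mu> N s * D s\<bar> \<le> B" by (rule sum_sd_bnd[OF pol mu Db])
      thus "norm (\<delta> ^ N * (\<Sum>s<m. sd pol \<mu> N s * D s)) \<le> B * \<delta> ^ N"
        using d0 by (simp add: abs_mult mult.commute mult_right_mono)
    qed
    show "(\<lambda>N. B * \<delta> ^ N) \<longlonglongrightarrow> 0"
      using d0 d1 by (intro tendsto_mult_right_zero LIMSEQ_power_zero) auto
  qed
  hence "(\<lambda>N. (\<Sum>s<m. \<mu> s * D s) - \<delta> ^ N * (\<Sum>s<m. sd pol \<mu> N s * D s)) \<longlonglongrightarrow> (\<Sum>s<m. \<mu> s * D s) - 0"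
    by (intro tendsto_diff tendsto_const)
  moreover have "(\<lambda>N. (\<Sum>s<m. \<mu> s * D s) - \<delta> ^ N * (\<Sum>s<m. sd pol \<mu> N s * D s)) = (\<lambda>N. \<Sum>t<N. f t)"
  proof
    fix N show "(\<Sum>s<m. \<mu> s * D s) - \<delta> ^ N * (\<Sum>s<m. sd pol \<mu> N s * D s) = (\<Sum>t<N. f t)"
      using ind[of N] by linarith
  qed
  ultimately have "(\<lambda>N. \<Sum>t<N. f t) \<longlonglongrightarrow> (\<Sum>s<m. \<mu> s * D s)" by simp
  hence "f sums (\<Sum>s<m. \<mu> s * D s)" unfolding sums_def .
  hence L: "suminf f = (\<Sum>s<m. \<mu> s * D s)" by (rule sums_unique[symmetric])
  have "(\<Sum>s<m. vd \<mu> pol s * g s) = (1 - \<delta>) * suminf f"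
    unfolding f_def by (rule visit_eq[OF pol mu gb])
  thus ?thesis using L d1 by (simp add: field_simps)
qed

end


context game begin

definition R :: "(nat \<Rightarrow> nat \<Rightarrow> nat \<Rightarrow> real) \<Rightarrow> nat \<Rightarrow> nat \<Rightarrow> (nat \<Rightarrow> nat) \<Rightarrow> real" where
  "R pol i s a = (\<Prod>j\<in>{..<n}-{i}. pol j s (a j))"

definition epol :: "nat \<Rightarrow> nat \<Rightarrow> nat \<Rightarrow> real" where
  "epol b = (\<lambda>s a. if s < m \<and> a = b then 1 else 0)"

definition dist1 :: "(nat \<Rightarrow> nat \<Rightarrow> nat \<Rightarrow> real) \<Rightarrow> (nat \<Rightarrow> nat \<Rightarrow> nat \<Rightarrow> real) \<Rightarrow> nat \<Rightarrow> real" where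
  "dist1 \<sigma> \<sigma>' s = (\<Sum>l<n. \<Sum>c<k l. \<bar>\<sigma> l s c - \<sigma>' l s c\<bar>)"

lemma dist1_nn: "0 \<le> dist1 \<sigma> \<sigma>' s" unfolding dist1_def by (intro sum_nonneg) auto

lemma epol_in: "b < K \<Longrightarrow> epol b \<in> player_policies m K"
proof -
  assume b: "b < K"
  have "\<And>s. s < m \<Longrightarrow> (\<Sum>a<K. epol b s a) = 1"
  proof -
    fix s assume "s < m"
    hence "(\<Sum>a<K. epol b s a) = (\<Sum>a<K. if a = b then 1 else 0)" by (intro sum.cong) (auto simp: epol_def)
    thus "(\<Sum>a<K. epol b s a) = 1" using b by simp
  qed
  thus ?thesis unfolding player_policies_def simplex_def using b by (auto simp: epol_def)
qed

lemma pol_comp: "pol \<in> Pol \<Longrightarrow> i < n \<Longrightarrow> pol i \<in> player_policies m (k i)"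
  unfolding policies_def by auto

lemma upd_in: "pol \<in> Pol \<Longrightarrow> i < n \<Longrightarrow> p \<in> player_policies m (k i) \<Longrightarrow> pol(i := p) \<in> Pol"
  unfolding policies_def by auto

lemma pj_upd: "i < n \<Longrightarrow> pj (pol(i := p)) s a = p s (a i) * R pol i s a"
proof -
  assume i: "i < n"
  have "pj (pol(i := p)) s a = (pol(i := p)) i s (a i) * (\<Prod>j\<in>{..<n}-{i}. (pol(i := p)) j s (a j))"
    unfolding pjoint_def using i by (subst prod.remove[of _ i]) auto
  also have "(\<Prod>j\<in>{..<n}-{i}. (pol(i := p)) j s (a j)) = R pol i s a"
    unfolding R_def by (intro prod.cong) auto
  finally show ?thesis by (simp only: fun_upd_same)
qed

lemma pj_self: "i < n \<Longrightarrow> pj pol s a = pol i s (a i) * R pol i s a"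
  using pj_upd[of i pol "pol i" s a] by simp

lemma R_nn: "pol \<in> Pol \<Longrightarrow> s < m \<Longrightarrow> a \<in> JA \<Longrightarrow> 0 \<le> R pol i s a"
  unfolding R_def by (intro prod_nonneg) (auto intro: pol_nonneg JA_mem)

lemma group_i: "i < n \<Longrightarrow> (\<Sum>a\<in>JA. G a) = (\<Sum>b<k i. \<Sum>a\<in>{a\<in>JA. a i = b}. G a)"
  by (rule sum.group[symmetric]) (auto simp: finJA JA_mem)

lemma R_sum_b:
  assumes pol: "pol \<in> Pol" and i: "i < n" and s: "s < m" and b: "b < k i"
  shows "(\<Sum>a\<in>{a\<in>JA. a i = b}. R pol i s a) = 1"
proof -
  have "(\<Sum>a\<in>{a\<in>JA. a i = b}. R pol i s a) = (\<Sum>a\<in>JA. if a i = b then R pol i s a else 0)"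
    using finJA by (rule sum.inter_filter)
  also have "\<dots> = (\<Sum>a\<in>JA. pj (pol(i := epol b)) s a)"
    using s by (intro sum.cong refl) (auto simp: pj_upd[OF i] epol_def)
  also have "\<dots> = 1" using pj_sum upd_in[OF pol i epol_in[OF b]] s by auto
  finally show ?thesis .
qed

lemma marg:
  assumes pol: "pol \<in> Pol" and i: "i < n" and s: "s < m"
  shows "(\<Sum>a\<in>JA. F (a i) * R pol i s a) = (\<Sum>b<k i. F b)"
proof -
  have "(\<Sum>a\<in>JA. F (a i) * R pol i s a) = (\<Sum>b<k i. \<Sum>a\<in>{a\<in>JA. a i = b}. F (a i) * R pol i s a)"
    by (rule group_i[OF i])
  also have "\<dots> = (\<Sum>b<k i. F b * (\<Sum>a\<in>{a\<in>JA. a i = b}. R pol i s a))"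
    by (intro sum.cong refl) (auto simp: sum_distrib_left)
  also have "\<dots> = (\<Sum>b<k i. F b)"
    using R_sum_b[OF pol i s] by (intro sum.cong) auto
  finally show ?thesis .
qed

lemma Q_def2: "Q i pol s b = (\<Sum>a\<in>{a\<in>JA. a i = b}. R pol i s a * h pol i s a)"
  unfolding Q_fn_def R_def h_def by simp

lemma gQ:
  assumes pol: "pol \<in> Pol" and i: "i < n" and s: "s < m"
  shows "(\<Sum>a\<in>JA. (pj (pol(i := p)) s a - pj pol s a) * h pol i s a) = (\<Sum>b<k i. (p s b - pol i s b) * Q i pol s b)"
proof -
  have "(\<Sum>a\<in>JA. (pj (pol(i := p)) s a - pj pol s a) * h pol i s a)
      = (\<Sum>a\<in>JA. (p s (a i) - pol i s (a i)) * (R pol i s a * h pol i s a))"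
    by (intro sum.cong refl) (simp add: pj_upd[OF i] pj_self[OF i, of pol] algebra_simps)
  also have "\<dots> = (\<Sum>b<k i. \<Sum>a\<in>{a\<in>JA. a i = b}. (p s (a i) - pol i s (a i)) * (R pol i s a * h pol i s a))"
    by (rule group_i[OF i])
  also have "\<dots> = (\<Sum>b<k i. (p s b - pol i s b) * Q i pol s b)"
    unfolding Q_def2 by (intro sum.cong refl) (auto simp: sum_distrib_left)
  finally show ?thesis .
qed

lemma Q_bnd:
  assumes pol: "pol \<in> Pol" and i: "i < n" and s: "s < m" and b: "b < k i"
  shows "0 \<le> Q i pol s b \<and> Q i pol s b \<le> 1 / (1 - \<delta>)"
proof -
  have "Q i pol s b \<le> (\<Sum>a\<in>{a\<in>JA. a i = b}. R pol i s a * (1 / (1 - \<delta>)))"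
    unfolding Q_def2 using h_bnd[OF pol i s] R_nn[OF pol s] by (intro sum_mono mult_left_mono) auto
  also have "\<dots> = 1 / (1 - \<delta>)" using R_sum_b[OF assms] by (simp add: sum_divide_distrib[symmetric])
  finally have "Q i pol s b \<le> 1 / (1 - \<delta>)" .
  moreover have "0 \<le> Q i pol s b"
    unfolding Q_def2 using h_bnd[OF pol i s] R_nn[OF pol s] by (intro sum_nonneg mult_nonneg_nonneg) auto
  ultimately show ?thesis by simp
qed

lemma Q_alt:
  assumes i: "i < n" and s: "s < m"
  shows "Q i pol s b = (\<Sum>a\<in>JA. pj (pol(i := epol b)) s a * h pol i s a)"
proof -
  have "Q i pol s b = (\<Sum>a\<in>JA. if a i = b then R pol i s a * h pol i s a else 0)"
    unfolding Q_def2 using finJA by (rule sum.inter_filter)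
  also have "\<dots> = (\<Sum>a\<in>JA. pj (pol(i := epol b)) s a * h pol i s a)"
    using s by (intro sum.cong refl) (auto simp: pj_upd[OF i] epol_def)
  finally show ?thesis .
qed

lemma pj_diff:
  assumes \<sigma>: "\<sigma> \<in> Pol" and \<sigma>': "\<sigma>' \<in> Pol" and s: "s < m"
  shows "(\<Sum>a\<in>JA. \<bar>pj \<sigma> s a - pj \<sigma>' s a\<bar>) \<le> dist1 \<sigma> \<sigma>' s"
proof -
  define hy where "hy l = (\<lambda>i. if i < l then \<sigma>' i else \<sigma> i)" for l
  have hy_in: "hy l \<in> Pol" for l
    using \<sigma> \<sigma>' unfolding policies_def hy_def by auto
  have hy_step: "hy (Suc l) = (hy l)(l := \<sigma>' l)" for l
    unfolding hy_def by (rule ext) auto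
  have hy_l: "hy l l = \<sigma> l" for l unfolding hy_def by simp
  have "l \<le> n \<Longrightarrow> (\<Sum>a\<in>JA. \<bar>pj \<sigma> s a - pj (hy l) s a\<bar>) \<le> (\<Sum>i<l. \<Sum>c<k i. \<bar>\<sigma> i s c - \<sigma>' i s c\<bar>)" for l
  proof (induction l)
    case 0
    have "hy 0 = \<sigma>" unfolding hy_def by auto
    thus ?case by simp
  next
    case (Suc l)
    hence l: "l < n" by simp
    have eq: "(\<Sum>a\<in>JA. \<bar>pj (hy l) s a - pj (hy (Suc l)) s a\<bar>) = (\<Sum>c<k l. \<bar>\<sigma> l s c - \<sigma>' l s c\<bar>)"
    proof -
      have "(\<Sum>a\<in>JA. \<bar>pj (hy l) s a - pj (hy (Suc l)) s a\<bar>)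
          = (\<Sum>a\<in>JA. \<bar>\<sigma> l s (a l) - \<sigma>' l s (a l)\<bar> * R (hy l) l s a)"
      proof (intro sum.cong refl)
        fix a assume a: "a \<in> JA"
        have "pj (hy l) s a = \<sigma> l s (a l) * R (hy l) l s a" using pj_self[OF l, of "hy l"] hy_l by simp
        moreover have "pj (hy (Suc l)) s a = \<sigma>' l s (a l) * R (hy l) l s a"
          unfolding hy_step by (rule pj_upd[OF l])
        ultimately show "\<bar>pj (hy l) s a - pj (hy (Suc l)) s a\<bar> = \<bar>\<sigma> l s (a l) - \<sigma>' l s (a l)\<bar> * R (hy l) l s a"
          using R_nn[OF hy_in s a] by (simp add: left_diff_distrib[symmetric] abs_mult)
      qed
      also have "\<dots> = (\<Sum>c<k l. \<bar>\<sigma> l s c - \<sigma>' l s c\<bar>)" by (rule marg[OF hy_in l s])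
      finally show ?thesis .
    qed
    have "(\<Sum>a\<in>JA. \<bar>pj \<sigma> s a - pj (hy (Suc l)) s a\<bar>)
        \<le> (\<Sum>a\<in>JA. \<bar>pj \<sigma> s a - pj (hy l) s a\<bar> + \<bar>pj (hy l) s a - pj (hy (Suc l)) s a\<bar>)"
      by (intro sum_mono) linarith
    also have "\<dots> = (\<Sum>a\<in>JA. \<bar>pj \<sigma> s a - pj (hy l) s a\<bar>) + (\<Sum>c<k l. \<bar>\<sigma> l s c - \<sigma>' l s c\<bar>)"
      by (simp add: sum.distrib eq)
    also have "\<dots> \<le> (\<Sum>i<l. \<Sum>c<k i. \<bar>\<sigma> i s c - \<sigma>' i s c\<bar>) + (\<Sum>c<k l. \<bar>\<sigma> l s c - \<sigma>' l s c\<bar>)"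
      using Suc l by simp
    finally show ?case by simp
  qed
  moreover have "hy n = \<sigma>'"
  proof (rule ext)
    fix i show "hy n i = \<sigma>' i"
    proof (cases "i < n")
      case False thus ?thesis using \<sigma> \<sigma>' unfolding hy_def policies_def by auto
    qed (auto simp: hy_def)
  qed
  ultimately show ?thesis unfolding dist1_def by force
qed

lemma V_diff_bnd:
  assumes pol: "pol \<in> Pol" and pol': "pol' \<in> Pol" and i: "i < n"
    and B: "\<And>s'. s' < m \<Longrightarrow> dist1 pol pol' s' \<le> B" and s: "s < m"
  shows "\<bar>V i pol s - V i pol' s\<bar> \<le> B / (1 - \<delta>)^2"
proof -
  define g where "g s = (\<Sum>a\<in>JA. (pj pol s a - pj pol' s a) * h pol' i s a)" for s
  have D: "\<And>s. s < m \<Longrightarrow> V i pol s - V i pol' s = g s + \<delta> * (\<Sum>s1<m. TM pol s s1 * (V i pol s1 - V i pol' s1))"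
    unfolding g_def by (rule V_diff_eq[OF pol' pol i])
  have gb: "\<bar>g s\<bar> \<le> B / (1 - \<delta>)" if s: "s < m" for s
  proof -
    have "\<bar>g s\<bar> \<le> (\<Sum>a\<in>JA. \<bar>pj pol s a - pj pol' s a\<bar> * (1 / (1 - \<delta>)))"
      unfolding g_def
    proof (intro order_trans[OF sum_abs] sum_mono)
      fix a assume "a \<in> JA"
      hence hb: "0 \<le> h pol' i s a" "h pol' i s a \<le> 1 / (1 - \<delta>)" using h_bnd[OF pol' i s] by auto
      thus "\<bar>(pj pol s a - pj pol' s a) * h pol' i s a\<bar> \<le> \<bar>pj pol s a - pj pol' s a\<bar> * (1 / (1 - \<delta>))"
        unfolding abs_mult by (intro mult_left_mono) auto
    qed
    also have "\<dots> = (\<Sum>a\<in>JA. \<bar>pj pol s a - pj pol' s a\<bar>) / (1 - \<delta>)" by (simp add: sum_divide_distrib)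
    also have "\<dots> \<le> B / (1 - \<delta>)" using pj_diff[OF pol pol' s] B[OF s] d1
      by (intro divide_right_mono) auto
    finally show ?thesis .
  qed
  have "\<bar>V i pol s - V i pol' s\<bar> \<le> B / (1 - \<delta>) / (1 - \<delta>)"
    by (rule resolvent_abs[OF TM_nonneg[OF pol] TM_sum[OF pol] D gb s]) auto
  thus ?thesis by (simp add: power2_eq_square)
qed

lemma Q_diff:
  assumes pol: "pol \<in> Pol" and pol': "pol' \<in> Pol" and j: "j < n" and s: "s < m" and b: "b < k j"
    and same: "pol j = pol' j" and B: "\<And>s'. s' < m \<Longrightarrow> dist1 pol pol' s' \<le> B"
  shows "\<bar>Q j pol s b - Q j pol' s b\<bar> \<le> 2 * B / (1 - \<delta>)^2"
proof -
  define \<sigma> where "\<sigma> = pol(j := epol b)"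
  define \<sigma>' where "\<sigma>' = pol'(j := epol b)"
  have \<sigma>in: "\<sigma> \<in> Pol" "\<sigma>' \<in> Pol" unfolding \<sigma>_def \<sigma>'_def
    using upd_in epol_in[OF b] pol pol' j by auto
  have dd: "dist1 \<sigma> \<sigma>' s = dist1 pol pol' s"
    unfolding dist1_def \<sigma>_def \<sigma>'_def using same by (intro sum.cong refl) auto
  have B0: "0 \<le> B" using B[OF s] dist1_nn[of pol pol' s] by linarith
  have "Q j pol s b - Q j pol' s b = (\<Sum>a\<in>JA. (pj \<sigma> s a - pj \<sigma>' s a) * h pol j s a)
        + (\<Sum>a\<in>JA. pj \<sigma>' s a * (h pol j s a - h pol' j s a))"
    unfolding Q_alt[OF j s] \<sigma>_def \<sigma>'_def
    by (simp add: sum_subtractf[symmetric] sum.distrib[symmetric] algebra_simps)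
  moreover have "\<bar>\<Sum>a\<in>JA. (pj \<sigma> s a - pj \<sigma>' s a) * h pol j s a\<bar> \<le> B / (1 - \<delta>)"
  proof -
    have "\<bar>\<Sum>a\<in>JA. (pj \<sigma> s a - pj \<sigma>' s a) * h pol j s a\<bar> \<le> (\<Sum>a\<in>JA. \<bar>pj \<sigma> s a - pj \<sigma>' s a\<bar> * (1 / (1 - \<delta>)))"
    proof (intro order_trans[OF sum_abs] sum_mono)
      fix a assume "a \<in> JA"
      hence hb: "0 \<le> h pol j s a" "h pol j s a \<le> 1 / (1 - \<delta>)" using h_bnd[OF pol j s] by auto
      thus "\<bar>(pj \<sigma> s a - pj \<sigma>' s a) * h pol j s a\<bar> \<le> \<bar>pj \<sigma> s a - pj \<sigma>' s a\<bar> * (1 / (1 - \<delta>))"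
        unfolding abs_mult by (intro mult_left_mono) auto
    qed
    also have "\<dots> = (\<Sum>a\<in>JA. \<bar>pj \<sigma> s a - pj \<sigma>' s a\<bar>) / (1 - \<delta>)" by (simp add: sum_divide_distrib)
    also have "\<dots> \<le> B / (1 - \<delta>)" using pj_diff[OF \<sigma>in s] dd B[OF s] d1
      by (intro divide_right_mono) auto
    finally show ?thesis .
  qed
  moreover have "\<bar>\<Sum>a\<in>JA. pj \<sigma>' s a * (h pol j s a - h pol' j s a)\<bar> \<le> \<delta> * (B / (1 - \<delta>)^2)"
  proof -
    have hd: "\<bar>h pol j s a - h pol' j s a\<bar> \<le> \<delta> * (B / (1 - \<delta>)^2)" if a: "a \<in> JA" for a
    proof -
      have "\<bar>\<Sum>s1<m. P s a s1 * (V j pol s1 - V j pol' s1)\<bar> \<le> (\<Sum>s1<m. P s a s1 * (B / (1 - \<delta>)^2))"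
      proof (intro order_trans[OF sum_abs] sum_mono)
        fix s1 assume "s1 \<in> {..<m}"
        hence "0 \<le> P s a s1" "\<bar>V j pol s1 - V j pol' s1\<bar> \<le> B / (1 - \<delta>)^2"
          using P_st s a V_diff_bnd[OF pol pol' j B] by auto
        thus "\<bar>P s a s1 * (V j pol s1 - V j pol' s1)\<bar> \<le> P s a s1 * (B / (1 - \<delta>)^2)"
          using mult_left_mono[of "\<bar>V j pol s1 - V j pol' s1\<bar>" "B / (1 - \<delta>)^2" "P s a s1"] by (simp add: abs_mult)
      qed
      also have "\<dots> = (\<Sum>s1<m. P s a s1) * (B / (1 - \<delta>)^2)" by (rule sum_distrib_right[symmetric])
      also have "\<dots> = B / (1 - \<delta>)^2" using P_st s a by simp
      finally have *: "\<bar>\<Sum>s1<m. P s a s1 * (V j pol s1 - V j pol' s1)\<bar> \<le> B / (1 - \<delta>)^2" .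
      have "h pol j s a - h pol' j s a = \<delta> * (\<Sum>s1<m. P s a s1 * (V j pol s1 - V j pol' s1))"
        unfolding h_def by (simp add: sum_subtractf right_diff_distrib)
      thus ?thesis using mult_left_mono[OF * less_imp_le[OF d0]] d0 by (simp add: abs_mult)
    qed
    have "\<bar>\<Sum>a\<in>JA. pj \<sigma>' s a * (h pol j s a - h pol' j s a)\<bar> \<le> (\<Sum>a\<in>JA. pj \<sigma>' s a * (\<delta> * (B / (1 - \<delta>)^2)))"
    proof (intro order_trans[OF sum_abs] sum_mono)
      fix a assume a: "a \<in> JA"
      thus "\<bar>pj \<sigma>' s a * (h pol j s a - h pol' j s a)\<bar> \<le> pj \<sigma>' s a * (\<delta> * (B / (1 - \<delta>)^2))"
        using mult_left_mono[OF hd[OF a] pj_nonneg[OF \<sigma>in(2) s a]] pj_nonneg[OF \<sigma>in(2) s a] by (simp add: abs_mult)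
    qed
    also have "\<dots> = (\<Sum>a\<in>JA. pj \<sigma>' s a) * (\<delta> * (B / (1 - \<delta>)^2))" by (rule sum_distrib_right[symmetric])
    also have "\<dots> = \<delta> * (B / (1 - \<delta>)^2)" using pj_sum[OF \<sigma>in(2) s] by simp
    finally show ?thesis .
  qed
  moreover have "B / (1 - \<delta>) \<le> B / (1 - \<delta>)^2"
  proof -
    have "(1 - \<delta>)^2 \<le> 1 - \<delta>" using d0 d1 by (simp add: power2_eq_square mult_left_le_one_le)
    thus ?thesis using B0 d1 by (intro divide_left_mono) auto
  qed
  moreover have "\<delta> * (B / (1 - \<delta>)^2) \<le> B / (1 - \<delta>)^2"
    using d0 d1 B0 by (intro mult_left_le_one_le) auto
  ultimately have "\<bar>Q j pol s b - Q j pol' s b\<bar> \<le> B / (1 - \<delta>)^2 + B / (1 - \<delta>)^2"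
    using abs_triangle_ineq[of "\<Sum>a\<in>JA. (pj \<sigma> s a - pj \<sigma>' s a) * h pol j s a"
        "\<Sum>a\<in>JA. pj \<sigma>' s a * (h pol j s a - h pol' j s a)"] by linarith
  thus ?thesis by simp
qed

end


lemma cs_abs:
  fixes x y :: "'a \<Rightarrow> real"
  shows "\<bar>\<Sum>b\<in>A. x b * y b\<bar> \<le> sqrt (\<Sum>b\<in>A. (x b)^2) * sqrt (\<Sum>b\<in>A. (y b)^2)"
proof -
  have "(\<Sum>b\<in>A. x b * y b)^2 \<le> (\<Sum>b\<in>A. (x b)^2) * (\<Sum>b\<in>A. (y b)^2)" by (rule Cauchy_Schwarz_ineq_sum)
  hence "sqrt ((\<Sum>b\<in>A. x b * y b)^2) \<le> sqrt ((\<Sum>b\<in>A. (x b)^2) * (\<Sum>b\<in>A. (y b)^2))"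
    by (rule real_sqrt_le_mono)
  thus ?thesis by (simp add: real_sqrt_mult)
qed

lemma simplex_le1: "z \<in> simplex K \<Longrightarrow> b < K \<Longrightarrow> z b \<le> 1"
proof -
  assume *: "z \<in> simplex K" "b < K"
  have "z b \<le> (\<Sum>c<K. z c)" using * unfolding simplex_def by (intro member_le_sum) auto
  thus ?thesis using * unfolding simplex_def by auto
qed

lemma simplex_dist2: "z \<in> simplex K \<Longrightarrow> y \<in> simplex K \<Longrightarrow> (\<Sum>b<K. (z b - y b)^2) \<le> 2"
proof -
  assume z: "z \<in> simplex K" and y: "y \<in> simplex K"
  have "(\<Sum>b<K. (z b - y b)^2) \<le> (\<Sum>b<K. z b + y b)"
  proof (rule sum_mono)
    fix b assume b: "b \<in> {..<K}"
    have z0: "0 \<le> z b" "z b \<le> 1" using z b simplex_le1[OF z] unfolding simplex_def by auto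
    have y0: "0 \<le> y b" "y b \<le> 1" using y b simplex_le1[OF y] unfolding simplex_def by auto
    have "z b * z b \<le> z b" using z0 by (simp add: mult_left_le_one_le)
    moreover have "y b * y b \<le> y b" using y0 by (simp add: mult_left_le_one_le)
    moreover have "0 \<le> z b * y b" using z0 y0 by simp
    ultimately show "(z b - y b)^2 \<le> z b + y b" by (simp add: power2_eq_square algebra_simps)
  qed
  also have "\<dots> = 2" using z y unfolding simplex_def by (simp add: sum.distrib)
  finally show ?thesis .
qed

context game begin

abbreviation "Ab \<equiv> Max (k ` {..<n})"

lemma k_le_Ab: "i < n \<Longrightarrow> k i \<le> Ab" by (intro Max_ge) auto

lemma Ab_ge1: "Ab \<ge> 1"
proof -
  have "k 0 \<le> Ab" using k_le_Ab n1 by auto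
  moreover have "k 0 \<ge> 1" using k1 n1 by auto
  ultimately show ?thesis by linarith
qed

abbreviation "pg \<eta> t \<equiv> pga n m k u P \<delta> \<eta> t"

lemma pga_in: "pg \<eta> t \<in> Pol"
proof (cases t)
  case 0
  have "pg \<eta> 0 \<in> Pol"
    unfolding policies_def
  proof (intro CollectI conjI allI impI)
    fix i assume i: "i < n"
    have "\<And>s. s < m \<Longrightarrow> (\<Sum>a<k i. pg \<eta> 0 i s a) = 1"
    proof -
      fix s assume s: "s < m"
      have "(\<Sum>a<k i. pg \<eta> 0 i s a) = (\<Sum>a<k i. 1 / real (k i))" using i s by (intro sum.cong) auto
      also have "\<dots> = 1" proof - have "k i \<ge> 1" using k1 i by auto thus ?thesis by simp qed
      finally show "(\<Sum>a<k i. pg \<eta> 0 i s a) = 1" .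
    qed
    thus "pg \<eta> 0 i \<in> player_policies m (k i)"
      unfolding player_policies_def simplex_def using i by auto
  next
    fix i assume "n \<le> i" thus "pg \<eta> 0 i = (\<lambda>_ _. 0)" by auto
  qed
  thus ?thesis using 0 by simp
next
  case (Suc t')
  have "pg \<eta> (Suc t') \<in> Pol"
    unfolding policies_def
  proof (intro CollectI conjI allI impI)
    fix i assume i: "i < n"
    show "pg \<eta> (Suc t') i \<in> player_policies m (k i)"
      unfolding player_policies_def using i k1 proj_char(1) by auto
  next
    fix i assume "n \<le> i" thus "pg \<eta> (Suc t') i = (\<lambda>_ _. 0)" by (auto simp: fun_eq_iff)
  qed
  thus ?thesis using Suc by simp
qed

lemma pga_Suc: "i < n \<Longrightarrow> s < m \<Longrightarrow>
  pg \<eta> (Suc t) i s = proj_simplex (k i) (\<lambda>a. pg \<eta> t i s a + \<eta> * Q i (pg \<eta> t) s a)"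
  by simp

lemma vi:
  assumes i: "i < n" and s: "s < m" and z: "z \<in> simplex (k i)"
  shows "(\<Sum>b<k i. (z b - pg \<eta> (Suc t) i s b) * (pg \<eta> (Suc t) i s b - (pg \<eta> t i s b + \<eta> * Q i (pg \<eta> t) s b))) \<ge> 0"
  unfolding pga_Suc[OF i s] using proj_char(2)[OF _ z] k1 i by auto

definition sq :: "real \<Rightarrow> nat \<Rightarrow> nat \<Rightarrow> nat \<Rightarrow> real" where
  "sq \<eta> t i s = (\<Sum>b<k i. (pg \<eta> (Suc t) i s b - pg \<eta> t i s b)^2)"

lemma sq_nn: "0 \<le> sq \<eta> t i s" unfolding sq_def by (intro sum_nonneg) auto

lemma pi_simplex: "i < n \<Longrightarrow> s < m \<Longrightarrow> pg \<eta> t i s \<in> simplex (k i)"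
  using pga_in[of \<eta> t] unfolding policies_def player_policies_def by auto

lemma ascent:
  assumes i: "i < n" and s: "s < m"
  shows "sq \<eta> t i s \<le> \<eta> * (\<Sum>b<k i. (pg \<eta> (Suc t) i s b - pg \<eta> t i s b) * Q i (pg \<eta> t) s b)"
proof -
  have "0 \<le> (\<Sum>b<k i. (pg \<eta> t i s b - pg \<eta> (Suc t) i s b) * (pg \<eta> (Suc t) i s b - (pg \<eta> t i s b + \<eta> * Q i (pg \<eta> t) s b)))"
    by (rule vi[OF i s pi_simplex[OF i s]])
  also have "\<dots> = \<eta> * (\<Sum>b<k i. (pg \<eta> (Suc t) i s b - pg \<eta> t i s b) * Q i (pg \<eta> t) s b) - sq \<eta> t i s"
    unfolding sq_def by (simp add: sum_distrib_left sum_subtractf[symmetric] power2_eq_square algebra_simps)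
  finally show ?thesis by simp
qed

lemma Qsq:
  assumes i: "i < n" and s: "s < m"
  shows "(\<Sum>b<k i. (Q i (pg \<eta> t) s b)^2) \<le> real (k i) / (1 - \<delta>)^2"
proof -
  have "(\<Sum>b<k i. (Q i (pg \<eta> t) s b)^2) \<le> (\<Sum>b<k i. (1 / (1 - \<delta>))^2)"
    using Q_bnd[OF pga_in i s] by (intro sum_mono power_mono) auto
  thus ?thesis by (simp add: power_divide)
qed

lemma sq_bnd:
  assumes i: "i < n" and s: "s < m" and eta: "\<eta> > 0"
  shows "sq \<eta> t i s \<le> \<eta>^2 * real (k i) / (1 - \<delta>)^2"
proof (cases "sq \<eta> t i s = 0")
  case True thus ?thesis using d1 by simp
next
  case False
  hence pos: "sq \<eta> t i s > 0" using sq_nn[of \<eta> t i s] by linarith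
  define q where "q = (\<Sum>b<k i. (Q i (pg \<eta> t) s b)^2)"
  have "sq \<eta> t i s \<le> \<eta> * (sqrt (sq \<eta> t i s) * sqrt q)"
    using ascent[OF i s, of \<eta> t] cs_abs[of "\<lambda>b. pg \<eta> (Suc t) i s b - pg \<eta> t i s b" "\<lambda>b. Q i (pg \<eta> t) s b" "{..<k i}"]
      eta unfolding sq_def q_def by (smt (verit) mult_left_mono)
  moreover have "sqrt (sq \<eta> t i s) * sqrt (sq \<eta> t i s) = sq \<eta> t i s" using sq_nn by simp
  ultimately have "sqrt (sq \<eta> t i s) * sqrt (sq \<eta> t i s) \<le> sqrt (sq \<eta> t i s) * (\<eta> * sqrt q)"
    by (simp add: mult_ac)
  hence "sqrt (sq \<eta> t i s) \<le> \<eta> * sqrt q" by (rule mult_left_le_imp_le) (use pos in auto)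
  hence "sq \<eta> t i s \<le> (\<eta> * sqrt q)^2"
    by (metis pos less_imp_le power_mono real_sqrt_ge_zero real_sqrt_pow2 sq_nn)
  also have "\<dots> = \<eta>^2 * q" using Qsq[OF i s] unfolding q_def
    by (simp add: power_mult_distrib sum_nonneg)
  also have "\<dots> \<le> \<eta>^2 * (real (k i) / (1 - \<delta>)^2)" unfolding q_def
    by (intro mult_left_mono Qsq[OF i s]) auto
  finally show ?thesis by simp
qed

lemma l1_bnd:
  assumes i: "i < n" and s: "s < m" and eta: "\<eta> > 0"
  shows "(\<Sum>b<k i. \<bar>pg \<eta> (Suc t) i s b - pg \<eta> t i s b\<bar>) \<le> \<eta> * real Ab / (1 - \<delta>)"
proof -
  define x where "x = (\<Sum>b<k i. \<bar>pg \<eta> (Suc t) i s b - pg \<eta> t i s b\<bar>)"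
  have "x^2 = (\<Sum>b<k i. 1 * \<bar>pg \<eta> (Suc t) i s b - pg \<eta> t i s b\<bar>)^2" unfolding x_def by simp
  also have "\<dots> \<le> (\<Sum>b<k i. 1^2) * (\<Sum>b<k i. \<bar>pg \<eta> (Suc t) i s b - pg \<eta> t i s b\<bar>^2)"
    by (rule Cauchy_Schwarz_ineq_sum)
  also have "\<dots> = real (k i) * sq \<eta> t i s" unfolding sq_def by simp
  also have "\<dots> \<le> real (k i) * (\<eta>^2 * real (k i) / (1 - \<delta>)^2)"
    by (intro mult_left_mono sq_bnd[OF i s eta]) auto
  also have "\<dots> \<le> (\<eta> * real Ab / (1 - \<delta>))^2"
  proof -
    have "real (k i) * real (k i) \<le> real Ab * real Ab"
      using k_le_Ab[OF i] by (intro mult_mono) auto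
    hence "real (k i) * real (k i) * (\<eta>^2 / (1 - \<delta>)^2) \<le> real Ab * real Ab * (\<eta>^2 / (1 - \<delta>)^2)"
      by (intro mult_right_mono) auto
    thus ?thesis by (simp add: power_divide power_mult_distrib power2_eq_square mult_ac)
  qed
  finally have "x^2 \<le> (\<eta> * real Ab / (1 - \<delta>))^2" .
  moreover have "0 \<le> \<eta> * real Ab / (1 - \<delta>)" using eta d1 by simp
  ultimately have "x \<le> \<eta> * real Ab / (1 - \<delta>)" using power2_le_imp_le by blast
  thus ?thesis unfolding x_def .
qed

lemma regret_term:
  assumes i: "i < n" and s: "s < m" and eta: "\<eta> > 0" and z: "z \<in> simplex (k i)"
    and small: "\<eta> * sqrt (real Ab) / (1 - \<delta>) \<le> 1"
  shows "\<eta> * (\<Sum>b<k i. (z b - pg \<eta> t i s b) * Q i (pg \<eta> t) s b) \<le> 3 * sqrt (sq \<eta> t i s)"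
proof -
  define y where "y = pg \<eta> (Suc t) i s"
  define x where "x = pg \<eta> t i s"
  define q where "q = Q i (pg \<eta> t) s"
  have VI: "0 \<le> (\<Sum>b<k i. (z b - y b) * (y b - x b)) - \<eta> * (\<Sum>b<k i. (z b - y b) * q b)"
    using vi[OF i s z, of \<eta> t] unfolding y_def x_def q_def
    by (simp add: sum_distrib_left sum_subtractf[symmetric] algebra_simps)
  have c1: "(\<Sum>b<k i. (z b - y b) * (y b - x b)) \<le> sqrt 2 * sqrt (sq \<eta> t i s)"
  proof -
    have "(\<Sum>b<k i. (z b - y b) * (y b - x b)) \<le> sqrt (\<Sum>b<k i. (z b - y b)^2) * sqrt (sq \<eta> t i s)"
      using cs_abs[of "\<lambda>b. z b - y b" "\<lambda>b. y b - x b" "{..<k i}"] unfolding sq_def y_def x_def by linarith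
    also have "\<dots> \<le> sqrt 2 * sqrt (sq \<eta> t i s)"
      using simplex_dist2[OF z] pi_simplex[OF i s, of \<eta> "Suc t"] sq_nn unfolding y_def
      by (intro mult_right_mono) auto
    finally show ?thesis .
  qed
  have c2: "\<eta> * (\<Sum>b<k i. (y b - x b) * q b) \<le> sqrt (sq \<eta> t i s)"
  proof -
    have "(\<Sum>b<k i. (y b - x b) * q b) \<le> sqrt (sq \<eta> t i s) * sqrt (\<Sum>b<k i. (q b)^2)"
      using cs_abs[of "\<lambda>b. y b - x b" q "{..<k i}"] unfolding sq_def y_def x_def by linarith
    also have "\<dots> \<le> sqrt (sq \<eta> t i s) * (sqrt (real Ab) / (1 - \<delta>))"
    proof (intro mult_left_mono)
      have "sqrt (\<Sum>b<k i. (q b)^2) \<le> sqrt (real (k i) / (1 - \<delta>)^2)"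
        unfolding q_def by (intro real_sqrt_le_mono Qsq[OF i s])
      also have "\<dots> = sqrt (real (k i)) / (1 - \<delta>)" using d1 by (simp add: real_sqrt_divide)
      also have "\<dots> \<le> sqrt (real Ab) / (1 - \<delta>)" using k_le_Ab[OF i] d1
        by (intro divide_right_mono) auto
      finally show "sqrt (\<Sum>b<k i. (q b)^2) \<le> sqrt (real Ab) / (1 - \<delta>)" .
    qed (use sq_nn in auto)
    finally have "\<eta> * (\<Sum>b<k i. (y b - x b) * q b) \<le> \<eta> * (sqrt (sq \<eta> t i s) * (sqrt (real Ab) / (1 - \<delta>)))"
      using eta by (intro mult_left_mono) auto
    also have "\<dots> = sqrt (sq \<eta> t i s) * (\<eta> * sqrt (real Ab) / (1 - \<delta>))" by simp
    also have "\<dots> \<le> sqrt (sq \<eta> t i s) * 1" using small sq_nn by (intro mult_left_mono) auto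
    finally show ?thesis by simp
  qed
  have split: "(\<Sum>b<k i. (z b - x b) * q b) = (\<Sum>b<k i. (z b - y b) * q b) + (\<Sum>b<k i. (y b - x b) * q b)"
    by (simp add: sum.distrib[symmetric] algebra_simps)
  have "sqrt 2 \<le> sqrt (2^2)" by (rule real_sqrt_le_mono) simp
  hence "sqrt 2 \<le> 2" by simp
  hence "sqrt 2 * sqrt (sq \<eta> t i s) \<le> 2 * sqrt (sq \<eta> t i s)" using sq_nn by (intro mult_right_mono) auto
  thus ?thesis using VI c1 c2 split unfolding x_def q_def by (simp add: distrib_left)
qed

end


context game begin

definition hyb :: "real \<Rightarrow> nat \<Rightarrow> nat \<Rightarrow> nat \<Rightarrow> nat \<Rightarrow> nat \<Rightarrow> real" where
  "hyb \<eta> t j = (\<lambda>i. if i < j then pg \<eta> (Suc t) i else pg \<eta> t i)"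

lemma hyb_in: "hyb \<eta> t j \<in> Pol"
  using pga_in[of \<eta> t] pga_in[of \<eta> "Suc t"] unfolding policies_def hyb_def by auto

lemma hyb_step: "hyb \<eta> t (Suc j) = (hyb \<eta> t j)(j := pg \<eta> (Suc t) j)"
  unfolding hyb_def by (rule ext) auto

lemma hyb_0: "hyb \<eta> t 0 = pg \<eta> t" unfolding hyb_def by auto

lemma hyb_n: "hyb \<eta> t n = pg \<eta> (Suc t)"
proof (rule ext)
  fix i show "hyb \<eta> t n i = pg \<eta> (Suc t) i"
  proof (cases "i < n")
    case False thus ?thesis using pga_in[of \<eta> t] pga_in[of \<eta> "Suc t"] unfolding hyb_def policies_def by auto
  qed (auto simp: hyb_def)
qed

lemma hyb_dist:
  assumes eta: "\<eta> > 0" and s: "s < m"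
  shows "dist1 (hyb \<eta> t j) (pg \<eta> t) s \<le> real n * (\<eta> * real Ab / (1 - \<delta>))"
proof -
  have "dist1 (hyb \<eta> t j) (pg \<eta> t) s \<le> (\<Sum>l<n. \<eta> * real Ab / (1 - \<delta>))"
    unfolding dist1_def
  proof (rule sum_mono)
    fix l assume l: "l \<in> {..<n}"
    show "(\<Sum>c<k l. \<bar>hyb \<eta> t j l s c - pg \<eta> t l s c\<bar>) \<le> \<eta> * real Ab / (1 - \<delta>)"
    proof (cases "l < j")
      case True thus ?thesis using l1_bnd[of l s \<eta> t] l s eta by (simp add: hyb_def)
    next
      case False thus ?thesis using eta d1 by (simp add: hyb_def)
    qed
  qed
  thus ?thesis by simp
qed

lemma player_step:
  assumes eta: "\<eta> > 0" and j: "j < n" and s0: "s0 < m"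
    and ap: "alpha_potential n m k u P \<delta> \<alpha> \<Phi>"
  shows "\<Phi> s0 (hyb \<eta> t (Suc j)) - \<Phi> s0 (hyb \<eta> t j) \<ge>
      sq \<eta> t j s0 / \<eta> - 2 * real n * (\<eta> * real Ab / (1 - \<delta>))^2 / (1 - \<delta>)^3 - \<alpha>"
proof -
  define \<pi> where "\<pi> = pg \<eta> t"
  define \<pi>' where "\<pi>' = pg \<eta> (Suc t)"
  define H where "H = hyb \<eta> t j"
  define H' where "H' = hyb \<eta> t (Suc j)"
  define \<beta> where "\<beta> = \<eta> * real Ab / (1 - \<delta>)"
  define E where "E = 2 * (real n * \<beta>) / (1 - \<delta>)^2"
  have Hin: "H \<in> Pol" "H' \<in> Pol" unfolding H_def H'_def by (rule hyb_in)+
  have H'eq: "H' = H(j := \<pi>' j)" unfolding H'_def H_def \<pi>'_def by (rule hyb_step)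
  have Hj: "H j = \<pi> j" unfolding H_def \<pi>_def hyb_def by simp
  have \<beta>0: "0 \<le> \<beta>" unfolding \<beta>_def using eta d1 by simp
  have E0: "0 \<le> E" unfolding E_def using \<beta>0 by simp
  have "\<bar>(\<Phi> s0 (H(j := \<pi>' j)) - \<Phi> s0 H) - (V j (H(j := \<pi>' j)) s0 - V j H s0)\<bar> \<le> \<alpha>"
    using ap s0 j Hin(1) pol_comp[OF pga_in j] unfolding alpha_potential_def \<pi>'_def by blast
  hence phi: "\<Phi> s0 H' - \<Phi> s0 H \<ge> (V j H' s0 - V j H s0) - \<alpha>" unfolding H'eq by linarith
  define g where "g s = (\<Sum>b<k j. (\<pi>' j s b - \<pi> j s b) * Q j H s b)" for s
  have D: "\<And>s. s < m \<Longrightarrow> V j H' s - V j H s = g s + \<delta> * (\<Sum>s1<m. TM H' s s1 * (V j H' s1 - V j H s1))"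
  proof -
    fix s assume s: "s < m"
    have "V j H' s - V j H s = (\<Sum>a\<in>JA. (pj H' s a - pj H s a) * h H j s a) + \<delta> * (\<Sum>s1<m. TM H' s s1 * (V j H' s1 - V j H s1))"
      by (rule V_diff_eq[OF Hin(1) Hin(2) j s])
    also have "(\<Sum>a\<in>JA. (pj H' s a - pj H s a) * h H j s a) = g s"
      unfolding H'eq g_def using gQ[OF Hin(1) j s, of "\<pi>' j"] Hj by simp
    finally show "V j H' s - V j H s = g s + \<delta> * (\<Sum>s1<m. TM H' s s1 * (V j H' s1 - V j H s1))" .
  qed
  have glb: "g s \<ge> sq \<eta> t j s / \<eta> - \<beta> * E" if s: "s < m" for s
  proof -
    have hd: "\<And>s'. s' < m \<Longrightarrow> dist1 (hyb \<eta> t j) (pg \<eta> t) s' \<le> real n * \<beta>"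
      using hyb_dist[OF eta] unfolding \<beta>_def by simp
    have same: "hyb \<eta> t j j = pg \<eta> t j" by (simp add: hyb_def)
    have Qd: "\<bar>Q j H s b - Q j \<pi> s b\<bar> \<le> E" if b: "b < k j" for b
      using Q_diff[OF hyb_in pga_in j s b same hd] unfolding E_def H_def \<pi>_def by simp
    have "g s = (\<Sum>b<k j. (\<pi>' j s b - \<pi> j s b) * Q j \<pi> s b) + (\<Sum>b<k j. (\<pi>' j s b - \<pi> j s b) * (Q j H s b - Q j \<pi> s b))"
      unfolding g_def by (simp add: sum.distrib[symmetric] algebra_simps)
    moreover have "(\<Sum>b<k j. (\<pi>' j s b - \<pi> j s b) * Q j \<pi> s b) \<ge> sq \<eta> t j s / \<eta>"
      using ascent[OF j s, of \<eta> t] eta unfolding \<pi>_def \<pi>'_def by (simp add: field_simps)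
    moreover have "\<bar>\<Sum>b<k j. (\<pi>' j s b - \<pi> j s b) * (Q j H s b - Q j \<pi> s b)\<bar> \<le> \<beta> * E"
    proof -
      have "\<bar>\<Sum>b<k j. (\<pi>' j s b - \<pi> j s b) * (Q j H s b - Q j \<pi> s b)\<bar> \<le> (\<Sum>b<k j. \<bar>\<pi>' j s b - \<pi> j s b\<bar> * E)"
      proof (intro order_trans[OF sum_abs] sum_mono)
        fix b assume "b \<in> {..<k j}"
        thus "\<bar>(\<pi>' j s b - \<pi> j s b) * (Q j H s b - Q j \<pi> s b)\<bar> \<le> \<bar>\<pi>' j s b - \<pi> j s b\<bar> * E"
          using Qd unfolding abs_mult by (intro mult_left_mono) auto
      qed
      also have "\<dots> = (\<Sum>b<k j. \<bar>\<pi>' j s b - \<pi> j s b\<bar>) * E" by (rule sum_distrib_right[symmetric])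
      also have "\<dots> \<le> \<beta> * E" using l1_bnd[OF j s eta, of t] E0 unfolding \<beta>_def \<pi>_def \<pi>'_def
        by (intro mult_right_mono) auto
      finally show ?thesis .
    qed
    ultimately show ?thesis by linarith
  qed
  have gge: "g s \<ge> - (\<beta> * E)" if s: "s < m" for s
    using glb[OF s] sq_nn[of \<eta> t j s] eta by (smt (verit) divide_nonneg_pos)
  have "V j H' s0 - V j H s0 \<ge> g s0 - \<delta> * (\<beta> * E) / (1 - \<delta>)"
    by (rule resolvent_point[OF TM_nonneg[OF Hin(2)] TM_sum[OF Hin(2)] D gge s0])
  hence "V j H' s0 - V j H s0 \<ge> sq \<eta> t j s0 / \<eta> - \<beta> * E - \<delta> * (\<beta> * E) / (1 - \<delta>)"
    using glb[OF s0] by linarith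
  moreover have "\<beta> * E + \<delta> * (\<beta> * E) / (1 - \<delta>) = 2 * real n * \<beta>^2 / (1 - \<delta>)^3"
  proof -
    have x: "1 - \<delta> > 0" using d1 by simp
    have "\<beta> * E + \<delta> * (\<beta> * E) / (1 - \<delta>) = \<beta> * E / (1 - \<delta>)"
      using x by (simp add: field_simps)
    also have "\<dots> = 2 * real n * \<beta>^2 / ((1 - \<delta>)^2 * (1 - \<delta>))"
      unfolding E_def by (simp add: power2_eq_square)
    also have "(1 - \<delta>)^2 * (1 - \<delta>) = (1 - \<delta>)^3" by (simp add: power2_eq_square power3_eq_cube)
    finally show ?thesis .
  qed
  ultimately show ?thesis using phi unfolding H_def H'_def \<beta>_def by linarith
qed

lemma state_step:
  assumes eta: "\<eta> > 0" and s0: "s0 < m"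
    and ap: "alpha_potential n m k u P \<delta> \<alpha> \<Phi>"
  shows "\<Phi> s0 (pg \<eta> (Suc t)) - \<Phi> s0 (pg \<eta> t) \<ge>
      (\<Sum>j<n. sq \<eta> t j s0) / \<eta> - real n * (2 * real n * (\<eta> * real Ab / (1 - \<delta>))^2 / (1 - \<delta>)^3 + \<alpha>)"
proof -
  have "\<Phi> s0 (pg \<eta> (Suc t)) - \<Phi> s0 (pg \<eta> t) = (\<Sum>j<n. \<Phi> s0 (hyb \<eta> t (Suc j)) - \<Phi> s0 (hyb \<eta> t j))"
    using sum_lessThan_telescope[of "\<lambda>j. \<Phi> s0 (hyb \<eta> t j)" n] hyb_0 hyb_n by simp
  also have "\<dots> \<ge> (\<Sum>j<n. sq \<eta> t j s0 / \<eta> - 2 * real n * (\<eta> * real Ab / (1 - \<delta>))^2 / (1 - \<delta>)^3 - \<alpha>)"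
    using player_step[OF eta _ s0 ap] by (intro sum_mono) auto
  finally show ?thesis by (simp add: sum_subtractf sum_divide_distrib algebra_simps)
qed

lemma Phi_step:
  assumes eta: "\<eta> > 0" and nu: "\<nu> \<in> state_dists m"
    and ap: "alpha_potential n m k u P \<delta> \<alpha> \<Phi>"
  shows "Phi_dist m \<Phi> \<nu> (pg \<eta> (Suc t)) - Phi_dist m \<Phi> \<nu> (pg \<eta> t) \<ge>
      (\<Sum>s<m. \<nu> s * (\<Sum>j<n. sq \<eta> t j s)) / \<eta> - real n * (2 * real n * (\<eta> * real Ab / (1 - \<delta>))^2 / (1 - \<delta>)^3 + \<alpha>)"
proof -
  define c where "c = real n * (2 * real n * (\<eta> * real Ab / (1 - \<delta>))^2 / (1 - \<delta>)^3 + \<alpha>)"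
  have "Phi_dist m \<Phi> \<nu> (pg \<eta> (Suc t)) - Phi_dist m \<Phi> \<nu> (pg \<eta> t) = (\<Sum>s<m. \<nu> s * (\<Phi> s (pg \<eta> (Suc t)) - \<Phi> s (pg \<eta> t)))"
    unfolding Phi_dist_def by (simp add: sum_subtractf[symmetric] algebra_simps)
  also have "\<dots> \<ge> (\<Sum>s<m. \<nu> s * ((\<Sum>j<n. sq \<eta> t j s) / \<eta> - c))"
    using state_step[OF eta _ ap] nu unfolding state_dists_def c_def by (intro sum_mono mult_left_mono) auto
  also have "(\<Sum>s<m. \<nu> s * ((\<Sum>j<n. sq \<eta> t j s) / \<eta> - c)) = (\<Sum>s<m. \<nu> s * (\<Sum>j<n. sq \<eta> t j s)) / \<eta> - (\<Sum>s<m. \<nu> s) * c"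
  proof -
    have "\<And>s. \<nu> s * ((\<Sum>j<n. sq \<eta> t j s) / \<eta> - c) = (\<nu> s * (\<Sum>j<n. sq \<eta> t j s)) / \<eta> - \<nu> s * c"
      by (simp add: right_diff_distrib)
    hence "(\<Sum>s<m. \<nu> s * ((\<Sum>j<n. sq \<eta> t j s) / \<eta> - c)) = (\<Sum>s<m. (\<nu> s * (\<Sum>j<n. sq \<eta> t j s)) / \<eta> - \<nu> s * c)"
      by (intro sum.cong) auto
    also have "\<dots> = (\<Sum>s<m. \<nu> s * (\<Sum>j<n. sq \<eta> t j s)) / \<eta> - (\<Sum>s<m. \<nu> s) * c"
      by (simp only: sum_subtractf sum_divide_distrib[symmetric] sum_distrib_right[symmetric])
    finally show ?thesis .
  qed
  finally show ?thesis using nu unfolding state_dists_def c_def by simp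
qed

end


context game begin

definition SS :: "(nat \<Rightarrow> real) \<Rightarrow> real \<Rightarrow> nat \<Rightarrow> real" where
  "SS \<nu> \<eta> t = (\<Sum>s<m. \<nu> s * (\<Sum>j<n. sq \<eta> t j s))"

lemma SS_nn: "\<nu> \<in> state_dists m \<Longrightarrow> 0 \<le> SS \<nu> \<eta> t"
  unfolding SS_def state_dists_def by (auto intro!: sum_nonneg mult_nonneg_nonneg sq_nn)

lemma Vm_bnd: "pol \<in> Pol \<Longrightarrow> \<mu> \<in> state_dists m \<Longrightarrow> i < n \<Longrightarrow> 0 \<le> Vm i \<mu> pol \<and> Vm i \<mu> pol \<le> 1 / (1 - \<delta>)"
proof -
  assume *: "pol \<in> Pol" "\<mu> \<in> state_dists m" "i < n"
  have "Vm i \<mu> pol \<le> (\<Sum>s<m. \<mu> s * (1 / (1 - \<delta>)))"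
    unfolding Vm_lin[OF *] using * V_bnd unfolding state_dists_def by (intro sum_mono mult_left_mono) auto
  also have "\<dots> = (\<Sum>s<m. \<mu> s) * (1 / (1 - \<delta>))" by (rule sum_distrib_right[symmetric])
  finally have "Vm i \<mu> pol \<le> 1 / (1 - \<delta>)" using * unfolding state_dists_def by simp
  moreover have "0 \<le> Vm i \<mu> pol"
    unfolding Vm_lin[OF *] using * V_bnd unfolding state_dists_def by (intro sum_nonneg mult_nonneg_nonneg) auto
  ultimately show ?thesis by simp
qed

lemma regret_bnd:
  assumes eta: "\<eta> > 0" and small: "\<eta> * sqrt (real Ab) / (1 - \<delta>) \<le> 1"
    and i: "i < n" and p: "p \<in> player_policies m (k i)" and mu: "\<mu> \<in> state_dists m"
    and nu: "\<nu> \<in> state_dists m" and rho: "\<rho> \<ge> 0"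
    and dnu: "\<And>s. s < m \<Longrightarrow> vd \<mu> ((pg \<eta> t)(i := p)) s \<le> \<rho> * \<nu> s"
  shows "Vm i \<mu> ((pg \<eta> t)(i := p)) - Vm i \<mu> (pg \<eta> t) \<le> 3 / ((1 - \<delta>) * \<eta>) * sqrt (\<rho> * SS \<nu> \<eta> t)"
proof -
  define \<pi> where "\<pi> = pg \<eta> t"
  define \<pi>' where "\<pi>' = \<pi>(i := p)"
  have pin: "\<pi> \<in> Pol" unfolding \<pi>_def by (rule pga_in)
  have pin': "\<pi>' \<in> Pol" unfolding \<pi>'_def by (rule upd_in[OF pin i p])
  define g where "g s = (\<Sum>b<k i. (p s b - \<pi> i s b) * Q i \<pi> s b)" for s
  define D where "D s = V i \<pi>' s - V i \<pi> s" for s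
  define d where "d s = vd \<mu> \<pi>' s" for s
  have Deq: "\<And>s. s < m \<Longrightarrow> D s = g s + \<delta> * (\<Sum>s1<m. TM \<pi>' s s1 * D s1)"
  proof -
    fix s assume s: "s < m"
    have "D s = (\<Sum>a\<in>JA. (pj \<pi>' s a - pj \<pi> s a) * h \<pi> i s a) + \<delta> * (\<Sum>s1<m. TM \<pi>' s s1 * (V i \<pi>' s1 - V i \<pi> s1))"
      unfolding D_def by (rule V_diff_eq[OF pin pin' i s])
    also have "(\<Sum>a\<in>JA. (pj \<pi>' s a - pj \<pi> s a) * h \<pi> i s a) = g s"
      unfolding g_def \<pi>'_def by (rule gQ[OF pin i s])
    finally show "D s = g s + \<delta> * (\<Sum>s1<m. TM \<pi>' s s1 * D s1)" unfolding D_def .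
  qed
  have Db: "\<bar>D s\<bar> \<le> 2 / (1 - \<delta>)" if s: "s < m" for s
    using V_bnd[OF pin i s] V_bnd[OF pin' i s] d1 unfolding D_def by (auto simp: abs_le_iff divide_right_mono)
  have psimp: "p s \<in> simplex (k i)" if s: "s < m" for s using p s unfolding player_policies_def by auto
  have gb: "\<bar>g s\<bar> \<le> 2 / (1 - \<delta>)" if s: "s < m" for s
  proof -
    have "\<bar>g s\<bar> \<le> (\<Sum>b<k i. (p s b + \<pi> i s b) * (1 / (1 - \<delta>)))"
      unfolding g_def
    proof (intro order_trans[OF sum_abs] sum_mono)
      fix b assume b: "b \<in> {..<k i}"
      have "0 \<le> p s b" using psimp[OF s] b unfolding simplex_def by auto
      moreover have "0 \<le> \<pi> i s b" using pol_nonneg[OF pin i s] b by auto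
      ultimately have "\<bar>p s b - \<pi> i s b\<bar> \<le> p s b + \<pi> i s b" by linarith
      moreover have "0 \<le> Q i \<pi> s b" "Q i \<pi> s b \<le> 1 / (1 - \<delta>)" using Q_bnd[OF pin i s] b by auto
      ultimately show "\<bar>(p s b - \<pi> i s b) * Q i \<pi> s b\<bar> \<le> (p s b + \<pi> i s b) * (1 / (1 - \<delta>))"
        unfolding abs_mult by (intro mult_mono) auto
    qed
    also have "\<dots> = ((\<Sum>b<k i. p s b) + (\<Sum>b<k i. \<pi> i s b)) * (1 / (1 - \<delta>))"
      by (simp only: sum_distrib_right[symmetric] sum.distrib)
    also have "\<dots> = 2 / (1 - \<delta>)" using psimp[OF s] pol_sum[OF pin i s] unfolding simplex_def by simp
    finally show ?thesis .
  qed
  have "Vm i \<mu> \<pi>' - Vm i \<mu> \<pi> = (\<Sum>s<m. \<mu> s * D s)"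
    unfolding Vm_lin[OF pin mu i] Vm_lin[OF pin' mu i] D_def
    by (simp add: sum_subtractf[symmetric] right_diff_distrib)
  also have "\<dots> = (1 / (1 - \<delta>)) * (\<Sum>s<m. d s * g s)"
    unfolding d_def by (rule pdl[OF pin' mu Deq Db gb])
  finally have reg_eq: "Vm i \<mu> \<pi>' - Vm i \<mu> \<pi> = (1 / (1 - \<delta>)) * (\<Sum>s<m. d s * g s)" .
  have "(\<Sum>s<m. d s * g s) \<le> (\<Sum>s<m. d s * (3 / \<eta> * sqrt (sq \<eta> t i s)))"
  proof (intro sum_mono mult_left_mono)
    fix s assume s: "s \<in> {..<m}"
    have "\<eta> * g s \<le> 3 * sqrt (sq \<eta> t i s)"
    proof -
      have s': "s < m" using s by simp
      show ?thesis unfolding g_def \<pi>_def using regret_term[OF i s' eta psimp[OF s'] small, of t] by simp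
    qed
    thus "g s \<le> 3 / \<eta> * sqrt (sq \<eta> t i s)" using eta by (simp add: field_simps)
    show "0 \<le> d s" unfolding d_def using visit_nn[OF pin' mu] s by simp
  qed
  also have "\<dots> = 3 / \<eta> * (\<Sum>s<m. sqrt (d s) * (sqrt (d s) * sqrt (sq \<eta> t i s)))"
  proof -
    have e: "\<And>s. s \<in> {..<m} \<Longrightarrow> d s * (3 / \<eta> * sqrt (sq \<eta> t i s)) = 3 / \<eta> * (sqrt (d s) * (sqrt (d s) * sqrt (sq \<eta> t i s)))"
    proof -
      fix s assume "s \<in> {..<m}"
      hence "sqrt (d s) * sqrt (d s) = d s" using visit_nn[OF pin' mu] unfolding d_def by simp
      thus "d s * (3 / \<eta> * sqrt (sq \<eta> t i s)) = 3 / \<eta> * (sqrt (d s) * (sqrt (d s) * sqrt (sq \<eta> t i s)))"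
        by (metis mult.assoc mult.left_commute)
    qed
    show ?thesis by (simp only: sum.cong[OF refl e] sum_distrib_left[symmetric])
  qed
  also have "\<dots> \<le> 3 / \<eta> * (sqrt (\<Sum>s<m. (sqrt (d s))^2) * sqrt (\<Sum>s<m. (sqrt (d s) * sqrt (sq \<eta> t i s))^2))"
    using cs_abs[of "\<lambda>s. sqrt (d s)" "\<lambda>s. sqrt (d s) * sqrt (sq \<eta> t i s)" "{..<m}"] eta
    by (intro mult_left_mono) auto
  also have "(\<Sum>s<m. (sqrt (d s))^2) = 1"
    using visit_nn[OF pin' mu] visit_sum[OF pin' mu] unfolding d_def by simp
  also have "(\<Sum>s<m. (sqrt (d s) * sqrt (sq \<eta> t i s))^2) = (\<Sum>s<m. d s * sq \<eta> t i s)"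
    using visit_nn[OF pin' mu] sq_nn unfolding d_def by (intro sum.cong) (auto simp: power_mult_distrib)
  also have "(\<Sum>s<m. d s * sq \<eta> t i s) \<le> \<rho> * SS \<nu> \<eta> t"
  proof -
    have "(\<Sum>s<m. d s * sq \<eta> t i s) \<le> (\<Sum>s<m. (\<rho> * \<nu> s) * (\<Sum>j<n. sq \<eta> t j s))"
    proof (intro sum_mono mult_mono)
      fix s assume s: "s \<in> {..<m}"
      show "d s \<le> \<rho> * \<nu> s" using dnu s unfolding d_def \<pi>'_def \<pi>_def by simp
      show "sq \<eta> t i s \<le> (\<Sum>j<n. sq \<eta> t j s)" using i by (intro member_le_sum sq_nn) auto
      show "0 \<le> \<rho> * \<nu> s" using rho nu s unfolding state_dists_def by auto
      show "0 \<le> sq \<eta> t i s" by (rule sq_nn)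
    qed
    also have "\<dots> = \<rho> * SS \<nu> \<eta> t" unfolding SS_def by (simp add: sum_distrib_left mult_ac)
    finally show ?thesis .
  qed
  hence "sqrt (\<Sum>s<m. d s * sq \<eta> t i s) \<le> sqrt (\<rho> * SS \<nu> \<eta> t)" by simp
  hence "3 / \<eta> * sqrt (\<Sum>s<m. d s * sq \<eta> t i s) \<le> 3 / \<eta> * sqrt (\<rho> * SS \<nu> \<eta> t)"
    using eta by (intro mult_left_mono) auto
  hence "3 / \<eta> * (sqrt 1 * sqrt (\<Sum>s<m. d s * sq \<eta> t i s)) \<le> 3 / \<eta> * sqrt (\<rho> * SS \<nu> \<eta> t)"
    by simp
  finally have "(\<Sum>s<m. d s * g s) \<le> 3 / \<eta> * sqrt (\<rho> * SS \<nu> \<eta> t)" by simp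
  hence "Vm i \<mu> \<pi>' - Vm i \<mu> \<pi> \<le> 1 / (1 - \<delta>) * (3 / \<eta> * sqrt (\<rho> * SS \<nu> \<eta> t))"
    unfolding reg_eq using d1 by (intro mult_left_mono) auto
  thus ?thesis unfolding \<pi>'_def \<pi>_def by (simp add: field_simps)
qed

end


context game begin

lemma n_ne: "{..<n} \<noteq> {}" using n1 by (metis lessThan_iff empty_iff less_le_trans zero_less_one)

lemma pp_ne: "i < n \<Longrightarrow> player_policies m (k i) \<noteq> {}"
  using pol_comp[OF pga_in[of 1 0]] by auto

lemma nash_bnd:
  assumes eta: "\<eta> > 0" and small: "\<eta> * sqrt (real Ab) / (1 - \<delta>) \<le> 1"
    and mu: "\<mu> \<in> state_dists m" and nu: "\<nu> \<in> state_dists m" and rho: "\<rho> \<ge> 0"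
    and dnu: "\<And>pol s. pol \<in> Pol \<Longrightarrow> s < m \<Longrightarrow> vd \<mu> pol s \<le> \<rho> * \<nu> s"
    and T: "T \<ge> 1"
  shows "nash_regret n m k u P \<delta> \<mu> \<eta> T \<le> 3 / ((1 - \<delta>) * \<eta>) * sqrt (\<rho> * (\<Sum>t=1..T. SS \<nu> \<eta> t) / real T)"
proof -
  define c where "c = 3 / ((1 - \<delta>) * \<eta>)"
  have c0: "c \<ge> 0" unfolding c_def using eta d1 by simp
  have each: "Max ((\<lambda>i. (SUP p\<in>player_policies m (k i). Vm i \<mu> ((pg \<eta> t)(i := p))) - Vm i \<mu> (pg \<eta> t)) ` {..<n})
      \<le> c * sqrt (\<rho> * SS \<nu> \<eta> t)" for t
  proof (subst Max_le_iff, goal_cases)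
    case 1 show ?case by simp
  next
    case 2 show ?case using n_ne by simp
  next
    case 3
    show ?case
    proof (intro ballI, elim imageE)
      fix x i assume x: "x = (SUP p\<in>player_policies m (k i). Vm i \<mu> ((pg \<eta> t)(i := p))) - Vm i \<mu> (pg \<eta> t)"
        and i: "i \<in> {..<n}"
      have "(SUP p\<in>player_policies m (k i). Vm i \<mu> ((pg \<eta> t)(i := p))) \<le> Vm i \<mu> (pg \<eta> t) + c * sqrt (\<rho> * SS \<nu> \<eta> t)"
      proof (rule cSUP_least)
        show "player_policies m (k i) \<noteq> {}" using pp_ne i by auto
      next
        fix p assume p: "p \<in> player_policies m (k i)"
        have "Vm i \<mu> ((pg \<eta> t)(i := p)) - Vm i \<mu> (pg \<eta> t) \<le> c * sqrt (\<rho> * SS \<nu> \<eta> t)"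
          unfolding c_def using i p by (intro regret_bnd[OF eta small _ p mu nu rho dnu]) (auto intro: upd_in pga_in)
        thus "Vm i \<mu> ((pg \<eta> t)(i := p)) \<le> Vm i \<mu> (pg \<eta> t) + c * sqrt (\<rho> * SS \<nu> \<eta> t)" by simp
      qed
      thus "x \<le> c * sqrt (\<rho> * SS \<nu> \<eta> t)" using x by simp
    qed
  qed
  have "nash_regret n m k u P \<delta> \<mu> \<eta> T \<le> (1 / real T) * (\<Sum>t=1..T. c * sqrt (\<rho> * SS \<nu> \<eta> t))"
    unfolding nash_regret_def by (intro mult_left_mono sum_mono each) auto
  also have "(\<Sum>t=1..T. c * sqrt (\<rho> * SS \<nu> \<eta> t)) = c * (\<Sum>t=1..T. 1 * sqrt (\<rho> * SS \<nu> \<eta> t))"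
    by (simp add: sum_distrib_left)
  also have "(\<Sum>t=1..T. 1 * sqrt (\<rho> * SS \<nu> \<eta> t)) \<le> sqrt (real T * (\<rho> * (\<Sum>t=1..T. SS \<nu> \<eta> t)))"
  proof -
    have "(\<Sum>t=1..T. 1 * sqrt (\<rho> * SS \<nu> \<eta> t)) \<le> sqrt (\<Sum>t=1..T. 1^2) * sqrt (\<Sum>t=1..T. (sqrt (\<rho> * SS \<nu> \<eta> t))^2)"
      using cs_abs[of "\<lambda>_. 1" "\<lambda>t. sqrt (\<rho> * SS \<nu> \<eta> t)" "{1..T}"] by linarith
    also have "(\<Sum>t=1..T. (sqrt (\<rho> * SS \<nu> \<eta> t))^2) = \<rho> * (\<Sum>t=1..T. SS \<nu> \<eta> t)"
      using rho SS_nn[OF nu] by (simp add: sum_distrib_left)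
    also have "(\<Sum>t=1..T. (1::real)^2) = real T" by simp
    finally show ?thesis by (simp add: real_sqrt_mult)
  qed
  hence "c * (\<Sum>t=1..T. 1 * sqrt (\<rho> * SS \<nu> \<eta> t)) \<le> c * sqrt (real T * (\<rho> * (\<Sum>t=1..T. SS \<nu> \<eta> t)))"
    using c0 by (intro mult_left_mono) auto
  hence "1 / real T * (c * (\<Sum>t=1..T. 1 * sqrt (\<rho> * SS \<nu> \<eta> t))) \<le> 1 / real T * (c * sqrt (real T * (\<rho> * (\<Sum>t=1..T. SS \<nu> \<eta> t))))"
    by (rule mult_left_mono) auto
  also have "1 / real T * (c * sqrt (real T * (\<rho> * (\<Sum>t=1..T. SS \<nu> \<eta> t)))) = c * sqrt (\<rho> * (\<Sum>t=1..T. SS \<nu> \<eta> t) / real T)"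
  proof -
    have Tp: "real T > 0" using T by simp
    define X where "X = \<rho> * (\<Sum>t=1..T. SS \<nu> \<eta> t)"
    have "real T * X = (real T)^2 * (X / real T)" using Tp by (simp add: power2_eq_square)
    hence "sqrt (real T * X) = sqrt ((real T)^2) * sqrt (X / real T)" by (simp only: real_sqrt_mult)
    hence "sqrt (real T * X) = real T * sqrt (X / real T)" by simp
    thus ?thesis using Tp unfolding X_def by simp
  qed
  finally show ?thesis unfolding c_def .
qed

lemma nash_triv:
  assumes mu: "\<mu> \<in> state_dists m" and T: "T \<ge> 1"
  shows "nash_regret n m k u P \<delta> \<mu> \<eta> T \<le> 1 / (1 - \<delta>)"
proof -
  have each: "Max ((\<lambda>i. (SUP p\<in>player_policies m (k i). Vm i \<mu> ((pg \<eta> t)(i := p))) - Vm i \<mu> (pg \<eta> t)) ` {..<n})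
      \<le> 1 / (1 - \<delta>)" for t
  proof (subst Max_le_iff, goal_cases)
    case 1 show ?case by simp
  next
    case 2 show ?case using n_ne by simp
  next
    case 3
    show ?case
    proof (intro ballI, elim imageE)
      fix x i assume x: "x = (SUP p\<in>player_policies m (k i). Vm i \<mu> ((pg \<eta> t)(i := p))) - Vm i \<mu> (pg \<eta> t)"
        and i: "i \<in> {..<n}"
      have "(SUP p\<in>player_policies m (k i). Vm i \<mu> ((pg \<eta> t)(i := p))) \<le> 1 / (1 - \<delta>)"
      proof (rule cSUP_least)
        show "player_policies m (k i) \<noteq> {}" using pp_ne i by auto
      next
        fix p assume p: "p \<in> player_policies m (k i)"
        show "Vm i \<mu> ((pg \<eta> t)(i := p)) \<le> 1 / (1 - \<delta>)"
          using Vm_bnd[OF upd_in[OF pga_in _ p] mu] i by auto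
      qed
      moreover have "0 \<le> Vm i \<mu> (pg \<eta> t)" using Vm_bnd[OF pga_in mu] i by auto
      ultimately show "x \<le> 1 / (1 - \<delta>)" using x by simp
    qed
  qed
  have "nash_regret n m k u P \<delta> \<mu> \<eta> T \<le> (1 / real T) * (\<Sum>t=1..T. 1 / (1 - \<delta>))"
    unfolding nash_regret_def by (intro mult_left_mono sum_mono each) auto
  also have "\<dots> = 1 / (1 - \<delta>)" using T by simp
  finally show ?thesis .
qed

lemma SS_sum:
  assumes eta: "\<eta> > 0" and nu: "\<nu> \<in> state_dists m"
    and ap: "alpha_potential n m k u P \<delta> \<alpha> \<Phi>"
    and Cb: "\<forall>pol\<in>Pol. \<forall>pol'\<in>Pol. \<forall>\<mu>'\<in>state_dists m. \<bar>Phi_dist m \<Phi> \<mu>' pol - Phi_dist m \<Phi> \<mu>' pol'\<bar> \<le> C"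
  shows "(\<Sum>t=1..T. SS \<nu> \<eta> t) \<le> \<eta> * (C + real T * (real n * (2 * real n * (\<eta> * real Ab / (1 - \<delta>))^2 / (1 - \<delta>)^3 + \<alpha>)))"
proof -
  define c0 where "c0 = real n * (2 * real n * (\<eta> * real Ab / (1 - \<delta>))^2 / (1 - \<delta>)^3 + \<alpha>)"
  define F where "F t = Phi_dist m \<Phi> \<nu> (pg \<eta> t)" for t
  have st: "SS \<nu> \<eta> t / \<eta> \<le> F (Suc t) - F t + c0" for t
    using Phi_step[OF eta nu ap, of t] unfolding F_def c0_def SS_def by linarith
  have "(\<Sum>t=1..T. SS \<nu> \<eta> t / \<eta>) \<le> (\<Sum>t=1..T. (F (Suc t) - F t) + c0)"
    by (intro sum_mono st)
  also have "\<dots> = (F (Suc T) - F 1) + real T * c0"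
    by (simp add: sum.distrib sum_Suc_diff)
  also have "F (Suc T) - F 1 \<le> C"
  proof -
    have "\<bar>F (Suc T) - F 1\<bar> \<le> C" unfolding F_def by (rule Cb[rule_format, OF pga_in pga_in nu])
    thus ?thesis by linarith
  qed
  finally have "(\<Sum>t=1..T. SS \<nu> \<eta> t) / \<eta> \<le> C + real T * c0" by (simp add: sum_divide_distrib)
  thus ?thesis using eta unfolding c0_def by (simp add: divide_le_eq mult.commute)
qed

lemma ratio_ge1:
  assumes pol: "pol \<in> Pol" and mu: "\<mu> \<in> state_dists m" and nu: "\<nu> \<in> state_dists m"
  shows "ratio_sup m (vd \<mu> pol) \<nu> \<ge> 1"
proof (rule ccontr)
  assume "\<not> ratio_sup m (vd \<mu> pol) \<nu> \<ge> 1"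
  hence lt: "ratio_sup m (vd \<mu> pol) \<nu> < 1" by simp
  have tm1: "(if \<nu> s = 0 then (if vd \<mu> pol s = 0 then 0 else \<infinity>) else ereal (vd \<mu> pol s / \<nu> s)) < 1"
    if s: "s < m" for s
    using lt SUP_upper[of s "{..<m}" "\<lambda>s. (if \<nu> s = 0 then (if vd \<mu> pol s = 0 then 0 else \<infinity>) else ereal (vd \<mu> pol s / \<nu> s))"] s
    unfolding ratio_sup_def by auto
  have nn: "\<And>s. s < m \<Longrightarrow> 0 \<le> \<nu> s" using nu unfolding state_dists_def by auto
  have le: "vd \<mu> pol s \<le> \<nu> s" if s: "s < m" for s
  proof (cases "\<nu> s = 0")
    case True thus ?thesis using tm1[OF s] by (auto split: if_splits)
  next
    case False
    hence "\<nu> s > 0" using nn[OF s] by simp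
    moreover have "vd \<mu> pol s / \<nu> s < 1" using tm1[OF s] False by simp
    ultimately show ?thesis by (simp add: divide_less_eq)
  qed
  obtain s0 where s0: "s0 < m" "\<nu> s0 > 0"
  proof (rule ccontr)
    assume "\<not> thesis"
    hence "\<And>s. s < m \<Longrightarrow> \<nu> s = 0" using that nn by force
    hence "(\<Sum>s<m. \<nu> s) = 0" by simp
    thus False using nu unfolding state_dists_def by simp
  qed
  have "vd \<mu> pol s0 < \<nu> s0"
  proof -
    have "vd \<mu> pol s0 / \<nu> s0 < 1" using tm1[OF s0(1)] s0(2) by simp
    thus ?thesis using s0(2) by (simp add: divide_less_eq)
  qed
  hence "(\<Sum>s<m. vd \<mu> pol s) < (\<Sum>s<m. \<nu> s)"
    using le s0 by (intro sum_strict_mono_ex1) auto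
  thus False using visit_sum[OF pol mu] nu unfolding state_dists_def by simp
qed

lemma kappa_ge1: "\<mu> \<in> state_dists m \<Longrightarrow> kappa_tilde n m k P \<delta> \<mu> \<ge> 1"
  unfolding kappa_tilde_def
proof (intro INF_greatest)
  fix \<nu> assume mu: "\<mu> \<in> state_dists m" and nu: "\<nu> \<in> state_dists m"
  have "1 \<le> ratio_sup m (vd \<mu> (pg 1 0)) \<nu>" by (rule ratio_ge1[OF pga_in mu nu])
  also have "\<dots> \<le> (SUP pol\<in>Pol. ratio_sup m (vd \<mu> pol) \<nu>)" by (rule SUP_upper[OF pga_in])
  finally show "1 \<le> (SUP pol\<in>Pol. ratio_sup m (vd \<mu> pol) \<nu>)" .
qed

lemma kappa_nu:
  assumes mu: "\<mu> \<in> state_dists m" and fin: "kappa_tilde n m k P \<delta> \<mu> < \<infinity>"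
  shows "\<exists>\<nu>\<in>state_dists m. \<forall>pol\<in>Pol. \<forall>s<m. vd \<mu> pol s \<le> 2 * real_of_ereal (kappa_tilde n m k P \<delta> \<mu>) * \<nu> s"
proof -
  define \<kappa> where "\<kappa> = kappa_tilde n m k P \<delta> \<mu>"
  have k1': "\<kappa> \<ge> 1" unfolding \<kappa>_def by (rule kappa_ge1[OF mu])
  have "\<kappa> \<noteq> \<infinity>" using fin unfolding \<kappa>_def by simp
  moreover have "\<kappa> \<noteq> - \<infinity>" using k1' by auto
  ultimately obtain r where r: "\<kappa> = ereal r" by (cases \<kappa>) auto
  have r1: "r \<ge> 1" using k1' r by simp
  have "\<kappa> < ereal (2 * r)" using r r1 by simp
  hence "(INF \<nu>\<in>state_dists m. SUP pol\<in>Pol. ratio_sup m (vd \<mu> pol) \<nu>) < ereal (2 * r)"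
    unfolding \<kappa>_def kappa_tilde_def .
  then obtain \<nu> where nu: "\<nu> \<in> state_dists m" and lt: "(SUP pol\<in>Pol. ratio_sup m (vd \<mu> pol) \<nu>) < ereal (2 * r)"
    unfolding INF_less_iff by blast
  have "\<forall>pol\<in>Pol. \<forall>s<m. vd \<mu> pol s \<le> 2 * r * \<nu> s"
  proof (intro ballI allI impI)
    fix pol s assume pol: "pol \<in> Pol" and s: "s < m"
    have "(if \<nu> s = 0 then (if vd \<mu> pol s = 0 then 0 else \<infinity>) else ereal (vd \<mu> pol s / \<nu> s)) \<le> ratio_sup m (vd \<mu> pol) \<nu>"
      unfolding ratio_sup_def using s by (intro SUP_upper) auto
    also have "\<dots> \<le> (SUP pol\<in>Pol. ratio_sup m (vd \<mu> pol) \<nu>)" by (rule SUP_upper[OF pol])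
    finally have tm: "(if \<nu> s = 0 then (if vd \<mu> pol s = 0 then 0 else \<infinity>) else ereal (vd \<mu> pol s / \<nu> s)) < ereal (2 * r)"
      using lt by simp
    have nn: "0 \<le> \<nu> s" using nu s unfolding state_dists_def by auto
    show "vd \<mu> pol s \<le> 2 * r * \<nu> s"
    proof (cases "\<nu> s = 0")
      case True thus ?thesis using tm by (auto split: if_splits)
    next
      case False
      hence "\<nu> s > 0" using nn by simp
      moreover have "vd \<mu> pol s / \<nu> s < 2 * r" using tm False by simp
      ultimately show ?thesis by (simp add: divide_less_eq)
    qed
  qed
  thus ?thesis using nu r unfolding \<kappa>_def by auto
qed

end


lemma lin_aux: "(z::real) \<le> y \<Longrightarrow> 0 \<le> x \<Longrightarrow> 0 \<le> y \<Longrightarrow> x + ((x + y) / 2 + z) \<le> 2 * (x + y)"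
proof -
  assume a: "z \<le> y" "0 \<le> x" "0 \<le> y"
  have "(x + y) / 2 = x / 2 + y / 2" by simp
  thus ?thesis using a by linarith
qed

lemma final_alg:
  fixes a q r A N ee eta S Y :: real
  assumes a: "a > 0" and q: "q > 0" and r: "r \<ge> 1" and A: "A \<ge> 1" and N: "N \<ge> 1"
    and ee: "ee = a^4" and Y: "Y = q^4" and eta: "eta = a^10 * q^2 / (2 * N * A)"
  shows "3 / (ee * eta) * sqrt (4 * r * eta * Y) \<le> 9 * sqrt (r * A * N) / a^9 * q"
proof -
  have etap: "eta > 0" using eta a q A N by simp
  have L0: "0 \<le> 3 / (ee * eta) * sqrt (4 * r * eta * Y)"
    using ee a etap r Y by (intro mult_nonneg_nonneg) auto
  have R0: "0 \<le> 9 * sqrt (r * A * N) / a^9 * q" using a q r A N by simp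
  have "(3 / (ee * eta) * sqrt (4 * r * eta * Y))^2 = 9 / (ee * eta)^2 * (4 * r * eta * Y)"
    using etap r Y by (simp add: power_mult_distrib power_divide)
  also have "\<dots> = 72 * (r * A * N * q^2 / a^18)"
  proof -
    have h4: "q^4 = q * (q * (q * q))" by (simp add: eval_nat_numeral)
    show ?thesis unfolding ee Y eta using a q A N h4 by (simp add: field_simps power2_eq_square)
  qed
  also have "\<dots> \<le> 81 * (r * A * N * q^2 / a^18)" using a q r A N by (intro mult_right_mono) auto
  also have "\<dots> = (9 * sqrt (r * A * N) / a^9 * q)^2"
    using r A N by (simp add: power_mult_distrib power_divide field_simps)
  finally show ?thesis using L0 R0 power2_le_imp_le by blast
qed

theorem theorem1:
  "\<exists>c>0. \<forall>n m (k :: nat \<Rightarrow> nat) u P \<delta> \<mu> \<alpha> \<Phi> C T \<eta>.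
     n \<ge> 1 \<longrightarrow> m \<ge> 1 \<longrightarrow> (\<forall>i<n. k i \<ge> 1) \<longrightarrow>
     0 < \<delta> \<longrightarrow> \<delta> < 1 \<longrightarrow>
     (\<forall>i<n. \<forall>s<m. \<forall>a\<in>joint_actions n k. 0 \<le> u i s a \<and> u i s a \<le> 1) \<longrightarrow>
     (\<forall>s<m. \<forall>a\<in>joint_actions n k. (\<forall>s'<m. 0 \<le> P s a s') \<and> (\<Sum>s'<m. P s a s') = 1) \<longrightarrow>
     \<mu> \<in> state_dists m \<longrightarrow>
     alpha_potential n m k u P \<delta> \<alpha> \<Phi> \<longrightarrow>
     C > 0 \<longrightarrow>
     (\<forall>pol\<in>policies n m k. \<forall>pol'\<in>policies n m k. \<forall>\<mu>'\<in>state_dists m.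
        \<bar>Phi_dist m \<Phi> \<mu>' pol - Phi_dist m \<Phi> \<mu>' pol'\<bar> \<le> C) \<longrightarrow>
     kappa_tilde n m k P \<delta> \<mu> < \<infinity> \<longrightarrow>
     T \<ge> 1 \<longrightarrow>
     \<eta> = (1 - \<delta>) powr 2.5 * sqrt (C + real n ^ 2 * \<alpha> * real T)
           / (2 * real n * real (Max (k ` {..<n})) * sqrt (real T)) \<longrightarrow>
     nash_regret n m k u P \<delta> \<mu> \<eta> T
       \<le> c * sqrt (real_of_ereal (kappa_tilde n m k P \<delta> \<mu>) * real (Max (k ` {..<n})) * real n)
             / (1 - \<delta>) powr (9/4)
             * (C / real T + real n ^ 2 * \<alpha>) powr (1/4)"
proof (intro exI[of _ 9] conjI allI impI)
  show "(0::real) < 9" by simp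
next
  fix n m and k :: "nat \<Rightarrow> nat" and u P \<delta> \<mu> \<alpha> \<Phi> C T \<eta>
  assume n1: "n \<ge> 1" and m1: "m \<ge> 1" and k1: "\<forall>i<n. k i \<ge> 1" and d0: "0 < \<delta>" and d1: "\<delta> < 1"
    and ub: "\<forall>i<n. \<forall>s<m. \<forall>a\<in>joint_actions n k. 0 \<le> u i s a \<and> u i s a \<le> 1"
    and Pst: "\<forall>s<m. \<forall>a\<in>joint_actions n k. (\<forall>s'<m. 0 \<le> P s a s') \<and> (\<Sum>s'<m. P s a s') = 1"
    and mu: "\<mu> \<in> state_dists m" and ap: "alpha_potential n m k u P \<delta> \<alpha> \<Phi>" and C0: "C > 0"
    and Cb: "\<forall>pol\<in>policies n m k. \<forall>pol'\<in>policies n m k. \<forall>\<mu>'\<in>state_dists m.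
        \<bar>Phi_dist m \<Phi> \<mu>' pol - Phi_dist m \<Phi> \<mu>' pol'\<bar> \<le> C"
    and fin: "kappa_tilde n m k P \<delta> \<mu> < \<infinity>" and T1: "T \<ge> 1"
    and eta: "\<eta> = (1 - \<delta>) powr 2.5 * sqrt (C + real n ^ 2 * \<alpha> * real T)
           / (2 * real n * real (Max (k ` {..<n})) * sqrt (real T))"
  interpret game n m k u P \<delta> using n1 m1 k1 d0 d1 ub Pst by unfold_locales auto
  define A where "A = real Ab"
  have A1: "A \<ge> 1" unfolding A_def using Ab_ge1 by simp
  have N1: "real n \<ge> 1" using n1 by simp
  have "\<bar>(\<Phi> 0 ((pg 1 0)(0 := pg 1 0 0)) - \<Phi> 0 (pg 1 0))
       - (V 0 ((pg 1 0)(0 := pg 1 0 0)) 0 - V 0 (pg 1 0) 0)\<bar> \<le> \<alpha>"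
    using ap[unfolded alpha_potential_def, rule_format, of 0 0 "pg 1 0" "pg 1 0 0"]
      m1 n1 pga_in[of 1 0] pol_comp[OF pga_in[of 1 0], of 0] by simp
  hence al0: "\<alpha> \<ge> 0" by simp
  define \<kappa> where "\<kappa> = kappa_tilde n m k P \<delta> \<mu>"
  have k1': "\<kappa> \<ge> 1" unfolding \<kappa>_def by (rule kappa_ge1[OF mu])
  have "\<kappa> \<noteq> \<infinity>" using fin unfolding \<kappa>_def by simp
  moreover have "\<kappa> \<noteq> - \<infinity>" using k1' by auto
  ultimately obtain r where r: "\<kappa> = ereal r" by (cases \<kappa>) auto
  have r1: "r \<ge> 1" using k1' r by simp
  have rk: "real_of_ereal (kappa_tilde n m k P \<delta> \<mu>) = r" using r unfolding \<kappa>_def by simp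
  obtain \<nu> where nu: "\<nu> \<in> state_dists m" and dnu: "\<forall>pol\<in>Pol. \<forall>s<m. vd \<mu> pol s \<le> 2 * r * \<nu> s"
    using kappa_nu[OF mu fin] rk by auto
  define e where "e = 1 - \<delta>"
  have e0: "e > 0" "e \<le> 1" unfolding e_def using d0 d1 by auto
  define a where "a = e powr (1/4)"
  have a0: "a > 0" unfolding a_def using e0 by simp
  have a1: "a \<le> 1" unfolding a_def using e0 by (simp add: powr_le1)
  have apow: "a ^ j = e powr (real j / 4)" for j
    unfolding a_def using e0 by (simp add: powr_power)
  have e4: "e = a^4" using apow[of 4] e0 by simp
  have e10: "e powr 2.5 = a^10" using apow[of 10] by simp
  have e9: "e powr (9/4) = a^9" using apow[of 9] by simp
  define Y where "Y = C / real T + real n ^ 2 * \<alpha>"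
  have Tp: "real T > 0" using T1 by simp
  have Y0: "Y > 0" unfolding Y_def using C0 Tp al0 by (intro add_pos_nonneg) auto
  define q where "q = Y powr (1/4)"
  have q0: "q > 0" unfolding q_def using Y0 by simp
  have qpow: "q ^ j = Y powr (real j / 4)" for j
    unfolding q_def using Y0 by (simp add: powr_power)
  have q4: "Y = q^4" using qpow[of 4] Y0 by simp
  have q2: "sqrt Y = q^2" using qpow[of 2] Y0 by (simp add: powr_half_sqrt)
  have sY: "sqrt (C + real n ^ 2 * \<alpha> * real T) / sqrt (real T) = sqrt Y"
  proof -
    have "(C + real n ^ 2 * \<alpha> * real T) / real T = Y" unfolding Y_def using Tp by (simp add: field_simps)
    thus ?thesis by (simp add: real_sqrt_divide[symmetric])
  qed
  have eta2: "\<eta> = a^10 * q^2 / (2 * real n * A)"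
    unfolding eta A_def e10[unfolded e_def] q2[symmetric] sY[symmetric] by simp
  have etap: "\<eta> > 0" unfolding eta2 using a0 q0 A1 N1 by simp
  have RHS: "9 * sqrt (real_of_ereal (kappa_tilde n m k P \<delta> \<mu>) * real (Max (k ` {..<n})) * real n)
             / (1 - \<delta>) powr (9/4) * (C / real T + real n ^ 2 * \<alpha>) powr (1/4)
           = 9 * sqrt (r * A * real n) / a^9 * q"
    unfolding rk A_def e9[unfolded e_def] q_def Y_def by simp
  have main: "nash_regret n m k u P \<delta> \<mu> \<eta> T \<le> 9 * sqrt (r * A * real n) / a^9 * q"
  proof (cases "sqrt (r * A * real n) / a^9 * q \<ge> 1 / a^4")
    case True
    have "nash_regret n m k u P \<delta> \<mu> \<eta> T \<le> 1 / (1 - \<delta>)" by (rule nash_triv[OF mu T1])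
    also have "\<dots> = 1 / a^4" using e4 unfolding e_def by simp
    also have "\<dots> \<le> sqrt (r * A * real n) / a^9 * q" by (rule True)
    also have "\<dots> \<le> 9 * sqrt (r * A * real n) / a^9 * q" using a0 q0 r1 A1 N1 by (simp add: divide_right_mono)
    finally show ?thesis .
  next
    case False
    hence "sqrt (r * A * real n) * q / a^9 < 1 / a^4" by simp
    hence "sqrt (r * A * real n) * q < a^9 / a^4" using a0 by (simp add: field_simps)
    also have "a^9 / a^4 = a^5" using a0 by (simp add: power_diff[symmetric])
    finally have lt: "sqrt (r * A * real n) * q < a^5" .
    hence "(sqrt (r * A * real n) * q)^2 < (a^5)^2"
      using q0 r1 A1 N1 by (intro power_strict_mono) auto
    moreover have sx: "(sqrt (r * A * real n))^2 = r * A * real n" using r1 A1 N1 by simp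
    moreover have "(sqrt (r * A * real n) * q)^2 = (sqrt (r * A * real n))^2 * q^2" by (rule power_mult_distrib)
    moreover have "((a::real)^5)^2 = a^10" by (simp add: power_mult[symmetric])
    ultimately have "r * A * real n * q^2 < a^10" by simp
    moreover have "A * real n * q^2 \<le> r * A * real n * q^2" using r1 A1 N1 q0 by simp
    ultimately have AnQ: "A * real n * q^2 < a^10" by linarith
    have a10: "a^10 \<le> 1" using a0 a1 by (simp add: power_le_one)
    have q21: "q^2 \<le> 1"
    proof -
      have "1 * 1 \<le> A * real n" using A1 N1 by (intro mult_mono) auto
      hence "1 * q^2 \<le> A * real n * q^2" by (intro mult_right_mono) auto
      hence "q^2 \<le> A * real n * q^2" by simp
      thus ?thesis using AnQ a10 by linarith
    qed
    have small: "\<eta> * sqrt (real Ab) / (1 - \<delta>) \<le> 1"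
    proof -
      have "\<eta> * sqrt (real Ab) / (1 - \<delta>) = a^6 * q^2 * sqrt A / (2 * real n * A)"
      proof -
        have p: "(a::real)^10 = a^6 * a^4" by (simp flip: power_add)
        have e': "1 - \<delta> = a^4" using e4 unfolding e_def .
        have "\<eta> * sqrt (real Ab) / (1 - \<delta>) = (a^6 * a^4 * q^2 / (2 * real n * A)) * sqrt A / a^4"
          unfolding eta2 A_def e' p by simp
        also have "\<dots> = a^6 * q^2 * sqrt A / (2 * real n * A)" using a0 A1 N1 by (simp add: field_simps)
        finally show ?thesis .
      qed
      also have "\<dots> \<le> 1"
      proof -
        have "A * 1 \<le> A * A" using A1 by (intro mult_left_mono) auto
        hence "sqrt A \<le> sqrt (A * A)" by (intro real_sqrt_le_mono) simp
        hence "sqrt A \<le> A" using A1 by simp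
        have "a^6 \<le> 1" using a0 a1 by (simp add: power_le_one)
        have "a^6 * q^2 * sqrt A \<le> 1 * 1 * A"
          using \<open>sqrt A \<le> A\<close> \<open>a^6 \<le> 1\<close> q21 a0 q0 A1 by (intro mult_mono) auto
        also have "\<dots> \<le> 2 * real n * A" using A1 N1 by simp
        finally show ?thesis using A1 N1 by simp
      qed
      finally show ?thesis .
    qed
    have nb: "nash_regret n m k u P \<delta> \<mu> \<eta> T \<le> 3 / ((1 - \<delta>) * \<eta>) * sqrt ((2 * r) * (\<Sum>t=1..T. SS \<nu> \<eta> t) / real T)"
      by (rule nash_bnd[OF etap small mu nu _ _ T1]) (use r1 dnu in auto)
    have ss: "(\<Sum>t=1..T. SS \<nu> \<eta> t) \<le> \<eta> * (C + real T * (real n * (2 * real n * (\<eta> * real Ab / (1 - \<delta>))^2 / (1 - \<delta>)^3 + \<alpha>)))"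
      by (rule SS_sum[OF etap nu ap Cb])
    have half: "real n * (2 * real n * (\<eta> * real Ab / (1 - \<delta>))^2 / (1 - \<delta>)^3) = Y / 2"
    proof -
      have e': "1 - \<delta> = a^4" using e4 unfolding e_def .
      have p: "(a::real)^10 = a^6 * a^4" by (simp flip: power_add)
      have z: "\<eta> * real Ab / (1 - \<delta>) = a^6 * q^2 / (2 * real n)"
      proof -
        have "\<eta> * real Ab / (1 - \<delta>) = (a^6 * a^4 * q^2 / (2 * real n * A)) * A / a^4"
          unfolding eta2 A_def e' p by simp
        also have "\<dots> = a^6 * q^2 / (2 * real n)" using a0 A1 N1 by (simp add: field_simps)
        finally show ?thesis .
      qed
      have "real n * (2 * real n * (\<eta> * real Ab / (1 - \<delta>))^2 / (1 - \<delta>)^3)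
          = real n * (2 * real n * (a^6 * q^2 / (2 * real n))^2 / (a^4)^3)" by (subst z) (simp only: e')
      also have "(a^6 * q^2 / (2 * real n))^2 = a^12 * q^4 / (4 * real n^2)"
        by (simp add: power_mult_distrib power_divide flip: power_mult)
      also have "((a::real)^4)^3 = a^12" by (simp flip: power_mult)
      also have "real n * (2 * real n * (a^12 * q^4 / (4 * real n^2)) / a^12) = q^4 / 2"
        using a0 N1 by (simp add: power2_eq_square)
      finally show ?thesis unfolding q4 .
    qed
    have na: "real n * \<alpha> \<le> real n ^ 2 * \<alpha>" using al0 N1 by (simp add: power2_eq_square mult_right_mono)
    have "(\<Sum>t=1..T. SS \<nu> \<eta> t) / real T \<le> \<eta> * (C / real T + (Y / 2 + real n * \<alpha>))"
    proof -
      have "(\<Sum>t=1..T. SS \<nu> \<eta> t) / real T \<le> \<eta> * (C + real T * (Y / 2 + real n * \<alpha>)) / real T"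
      proof -
        have e1: "real n * (2 * real n * (\<eta> * real Ab / (1 - \<delta>))^2 / (1 - \<delta>)^3 + \<alpha>) = Y / 2 + real n * \<alpha>"
          using half by (simp only: distrib_left)
        have "(\<Sum>t=1..T. SS \<nu> \<eta> t) \<le> \<eta> * (C + real T * (Y / 2 + real n * \<alpha>))"
          using ss unfolding e1 .
        thus ?thesis using Tp by (intro divide_right_mono) auto
      qed
      also have "\<dots> = \<eta> * (C / real T + (Y / 2 + real n * \<alpha>))" using Tp by (simp add: field_simps)
      finally show ?thesis .
    qed
    also have "\<dots> \<le> \<eta> * (2 * Y)"
    proof (rule mult_left_mono)
      have cT: "0 \<le> C / real T" using C0 Tp by simp
      have n2a: "0 \<le> real n ^ 2 * \<alpha>" using al0 by simp
      show "C / real T + (Y / 2 + real n * \<alpha>) \<le> 2 * Y"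
        using lin_aux[OF na cT n2a] unfolding Y_def .
    qed (use etap in simp)
    finally have sb: "(\<Sum>t=1..T. SS \<nu> \<eta> t) / real T \<le> \<eta> * (2 * Y)" .
    have "sqrt ((2 * r) * (\<Sum>t=1..T. SS \<nu> \<eta> t) / real T) \<le> sqrt (4 * r * \<eta> * Y)"
    proof (rule real_sqrt_le_mono)
      have "(2 * r) * (\<Sum>t=1..T. SS \<nu> \<eta> t) / real T = (2 * r) * ((\<Sum>t=1..T. SS \<nu> \<eta> t) / real T)" by simp
      also have "\<dots> \<le> (2 * r) * (\<eta> * (2 * Y))" using sb r1 by (intro mult_left_mono) auto
      finally show "(2 * r) * (\<Sum>t=1..T. SS \<nu> \<eta> t) / real T \<le> 4 * r * \<eta> * Y" by simp
    qed
    hence sq4: "sqrt ((2 * r) * (\<Sum>t=1..T. SS \<nu> \<eta> t) / real T) \<le> sqrt (4 * r * \<eta> * Y)" .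
    have "nash_regret n m k u P \<delta> \<mu> \<eta> T \<le> 3 / ((1 - \<delta>) * \<eta>) * sqrt (4 * r * \<eta> * Y)"
    proof -
      have "0 \<le> 3 / ((1 - \<delta>) * \<eta>)" using etap d1 by simp
      hence "3 / ((1 - \<delta>) * \<eta>) * sqrt ((2 * r) * (\<Sum>t=1..T. SS \<nu> \<eta> t) / real T) \<le> 3 / ((1 - \<delta>) * \<eta>) * sqrt (4 * r * \<eta> * Y)"
        by (rule mult_left_mono[OF sq4])
      thus ?thesis using nb by linarith
    qed
    also have "\<dots> \<le> 9 * sqrt (r * A * real n) / a^9 * q"
      by (rule final_alg[OF a0 q0 r1 A1 N1 e4[unfolded e_def] q4 eta2])
    finally show ?thesis .
  qed
  show "nash_regret n m k u P \<delta> \<mu> \<eta> T \<le> 9 * sqrt (real_of_ereal (kappa_tilde n m k P \<delta> \<mu>) * real (Max (k ` {..<n})) * real n)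
             / (1 - \<delta>) powr (9/4) * (C / real T + real n ^ 2 * \<alpha>) powr (1/4)"
    unfolding RHS by (rule main)
qed



end
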